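(* Let $h=(a,s,p):\mathbb{D}\to\overline{\mathcal{P}}$ be holomorphic. Then there exists a holomorphic $H:\mathbb{D}\to\mathbb{C}^{2\times2}$ with $\pi\circ H=h$ if and only if there is no point $\alpha\in\mathbb{D}$ such that, for some odd positive integer $n$, (1) $\alpha$ is a zero of $\tfrac14 s^2-p$ of multiplicity exactly $n$, and (2) $\alpha$ is a zero of $a$ of multiplicity greater than $n$ (a zero of an identically vanishing function being regarded as of infinite multiplicity).
   Context: $\mathbb{D}$ is the open unit disc. $\mathbb{B}$ is the open unit ball of $\mathbb{C}^{2\times2}$ (operator norm), $\pi(A)=(a_{21},\operatorname{tr}A,\det A)$ for $A=[a_{ij}]$, $\mathcal{P}=\pi(\mathbb{B})$ and $\overline{\mathcal{P}}$ its closure. *)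

theory Defs
  imports "HOL-Analysis.Analysis"
begin

definition matBall :: "(complex^2^2) set" where
  "matBall = {A. onorm (\<lambda>x. A *v x) < 1}"

definition piMap :: "complex^2^2 \<Rightarrow> complex \<times> complex \<times> complex" where
  "piMap A = (A $ 2 $ 1, A $ 1 $ 1 + A $ 2 $ 2, det A)"

definition Pent :: "(complex \<times> complex \<times> complex) set" where
  "Pent = piMap ` matBall"

text \<open>f (holomorphic on the unit disc) has a zero at alpha of multiplicity at least m
  (identically vanishing functions have zeros of every multiplicity).\<close>
definition zero_mult_ge :: "(complex \<Rightarrow> complex) \<Rightarrow> complex \<Rightarrow> nat \<Rightarrow> bool" where
  "zero_mult_ge f \<alpha> m \<longleftrightarrow>
     (\<exists>g. g holomorphic_on ball 0 1 \<and> (\<forall>z\<in>ball 0 1. f z = (z - \<alpha>) ^ m * g z))"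

definition zero_mult_eq :: "(complex \<Rightarrow> complex) \<Rightarrow> complex \<Rightarrow> nat \<Rightarrow> bool" where
  "zero_mult_eq f \<alpha> n \<longleftrightarrow> zero_mult_ge f \<alpha> n \<and> \<not> zero_mult_ge f \<alpha> (Suc n)"

end

theory Submission
  imports Defs "HOL-Complex_Analysis.Complex_Analysis"
begin

lemma hol_local:
  assumes "open S" "\<And>x. x \<in> S \<Longrightarrow> \<exists>\<rho>>0. f holomorphic_on ball x \<rho>"
  shows "f holomorphic_on S"
proof -
  have "\<exists>f'. DERIV f x :> f'" if xS: "x \<in> S" for x
  proof -
    obtain \<rho> where "\<rho> > 0" "f holomorphic_on ball x \<rho>" using assms(2)[OF xS] by blast
    then show ?thesis using holomorphic_on_open[of "ball x \<rho>" f] by auto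
  qed
  then show ?thesis using holomorphic_on_open[OF assms(1)] by blast
qed

lemma glob_factor:
  assumes S: "open S" and f: "f holomorphic_on S" and r: "r > 0" "ball \<alpha> r \<subseteq> S"
    and g: "g holomorphic_on ball \<alpha> r" and eq: "\<And>z. z \<in> ball \<alpha> r \<Longrightarrow> f z = (z-\<alpha>)^m * g z"
  shows "\<exists>G. G holomorphic_on S \<and> (\<forall>z\<in>S. f z = (z-\<alpha>)^m * G z) \<and> (\<forall>z\<in>ball \<alpha> r. G z = g z)"
proof -
  define G where "G z = (if z = \<alpha> then g \<alpha> else f z / (z-\<alpha>)^m)" for z
  have Gg: "G z = g z" if "z \<in> ball \<alpha> r" for z
    using eq[OF that] by (auto simp: G_def)
  have h1: "G holomorphic_on ball \<alpha> r" using holomorphic_transform[OF g] Gg by metis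
  have h2: "G holomorphic_on (S - {\<alpha>})"
  proof -
    have "(\<lambda>z. f z / (z-\<alpha>)^m) holomorphic_on (S - {\<alpha>})"
      by (intro holomorphic_intros holomorphic_on_subset[OF f]) auto
    then show ?thesis by (rule holomorphic_transform) (auto simp: G_def)
  qed
  have "G holomorphic_on (S - {\<alpha>}) \<union> ball \<alpha> r"
    by (intro holomorphic_on_Un h1 h2) (use S in auto)
  moreover have "(S - {\<alpha>}) \<union> ball \<alpha> r = S" using r by auto
  ultimately have "G holomorphic_on S" by simp
  moreover have "\<forall>z\<in>S. f z = (z-\<alpha>)^m * G z"
  proof
    fix z assume "z \<in> S"
    show "f z = (z-\<alpha>)^m * G z"
    proof (cases "z = \<alpha>")
      case True then show ?thesis using eq[of \<alpha>] r by (simp add: G_def)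
    next
      case False then show ?thesis by (simp add: G_def)
    qed
  qed
  ultimately show ?thesis using Gg by blast
qed

lemma local_order:
  assumes f: "f holomorphic_on S" and S: "open S" "connected S" and aS: "\<alpha> \<in> S"
    and nz: "\<exists>w\<in>S. f w \<noteq> 0"
  obtains m r g where "0 < r" "ball \<alpha> r \<subseteq> S" "g holomorphic_on ball \<alpha> r"
    "\<And>w. w \<in> ball \<alpha> r \<Longrightarrow> f w = (w - \<alpha>)^m * g w"
    "\<And>w. w \<in> ball \<alpha> r \<Longrightarrow> g w \<noteq> 0"
proof (cases "f \<alpha> = 0")
  case True
  have nc: "\<not> f constant_on S"
  proof
    assume "f constant_on S"
    then obtain c where c: "\<And>x. x \<in> S \<Longrightarrow> f x = c" unfolding constant_on_def by blast
    from nz obtain w where "w \<in> S" "f w \<noteq> 0" by blast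
    then show False using c[OF aS] c[of w] True by simp
  qed
  show ?thesis
    by (rule holomorphic_factor_zero_nonconstant[OF f S aS True nc]) (rule that, assumption+)
next
  case False
  have "continuous_on S f" using f holomorphic_on_imp_continuous_on by blast
  then have "isCont f \<alpha>" using S(1) aS continuous_on_eq_continuous_at by blast
  then obtain e where e: "e > 0" "\<forall>w. dist \<alpha> w < e \<longrightarrow> f w \<noteq> 0"
    using continuous_at_avoid[of \<alpha> f 0] False by blast
  obtain e' where e': "e' > 0" "ball \<alpha> e' \<subseteq> S" using S(1) aS open_contains_ball by blast
  have sub: "ball \<alpha> (min e e') \<subseteq> S" using e'(2) by auto
  have hol: "f holomorphic_on ball \<alpha> (min e e')" using holomorphic_on_subset[OF f sub] .
  have nz': "f w \<noteq> 0" if "w \<in> ball \<alpha> (min e e')" for w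
    using e(2) that by (simp add: dist_commute)
  show ?thesis
    by (rule that[of "min e e'" f 0]) (use e e' sub hol nz' in auto)
qed

lemma order_via_zorder:
  assumes r: "r > 0" and g: "g holomorphic_on ball \<alpha> r" and g0: "g \<alpha> \<noteq> 0"
    and eq: "\<And>w. w \<in> ball \<alpha> r \<Longrightarrow> f w = (w-\<alpha>)^m * g w"
  shows "zorder f \<alpha> = int m"
proof (rule zorder_eqI[OF open_ball _ g g0])
  show "\<alpha> \<in> ball \<alpha> r" using r by simp
  fix w assume "w \<in> ball \<alpha> r" "w \<noteq> \<alpha>"
  then show "f w = g w * (w - \<alpha>) powi int m" using eq by (simp add: power_int_of_nat mult.commute)
qed


lemma eventually_nz_ball:
  fixes a :: "complex \<Rightarrow> complex"
  assumes "continuous_on S a" "open S" "x \<in> S" "a x \<noteq> 0"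
  obtains \<rho> where "\<rho> > 0" "ball x \<rho> \<subseteq> S" "\<And>w. w \<in> ball x \<rho> \<Longrightarrow> a w \<noteq> 0"
proof -
  have "isCont a x" using assms continuous_on_eq_continuous_at by blast
  then obtain e where e: "e > 0" "\<forall>w. dist x w < e \<longrightarrow> a w \<noteq> 0"
    using continuous_at_avoid[of x a 0] assms(4) by blast
  obtain e' where e': "e' > 0" "ball x e' \<subseteq> S" using assms(2,3) open_contains_ball by blast
  have "ball x (min e e') \<subseteq> S" using e' by auto
  moreover have "a w \<noteq> 0" if "w \<in> ball x (min e e')" for w using e that by simp
  ultimately show ?thesis using that[of "min e e'"] e e' by simp
qed

lemma global_div:
  assumes S: "open S" "connected S" and a: "a holomorphic_on S" and f: "f holomorphic_on S"
    and nz: "\<exists>w\<in>S. a w \<noteq> 0"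
    and loc: "\<And>\<alpha>. \<alpha> \<in> S \<Longrightarrow> a \<alpha> = 0 \<Longrightarrow>
       \<exists>\<rho>>0. \<exists>c. c holomorphic_on ball \<alpha> \<rho> \<and> (\<forall>z\<in>ball \<alpha> \<rho>. f z = a z * c z)"
  shows "\<exists>b. b holomorphic_on S \<and> (\<forall>z\<in>S. f z = a z * b z)"
proof -
  define b where "b z = (if a z \<noteq> 0 then f z / a z else Lim (at z) (\<lambda>w. f w / a w))" for z
  have ac: "continuous_on S a" using a holomorphic_on_imp_continuous_on by blast
  have loc2: "\<exists>\<rho>>0. \<exists>c. ball \<alpha> \<rho> \<subseteq> S \<and> c holomorphic_on ball \<alpha> \<rho> \<and> (\<forall>z\<in>ball \<alpha> \<rho>. f z = a z * c z \<and> b z = c z)"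
    if aS: "\<alpha> \<in> S" for \<alpha>
  proof (cases "a \<alpha> = 0")
    case False
    obtain \<rho> where r: "\<rho> > 0" "ball \<alpha> \<rho> \<subseteq> S" "\<And>w. w \<in> ball \<alpha> \<rho> \<Longrightarrow> a w \<noteq> 0"
      using eventually_nz_ball[OF ac S(1) aS False] by blast
    have "(\<lambda>z. f z / a z) holomorphic_on ball \<alpha> \<rho>"
      using r by (intro holomorphic_intros holomorphic_on_subset[OF f] holomorphic_on_subset[OF a]) auto
    moreover have "\<forall>z\<in>ball \<alpha> \<rho>. f z = a z * (f z / a z) \<and> b z = f z / a z"
      using r(3) by (simp add: b_def)
    ultimately show ?thesis using r by blast
  next
    case True
    obtain \<rho> c where c: "\<rho> > 0" "c holomorphic_on ball \<alpha> \<rho>" "\<And>z. z\<in>ball \<alpha> \<rho> \<Longrightarrow> f z = a z * c z"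
      using loc[OF aS True] by blast
    obtain m r g where g: "0 < r" "ball \<alpha> r \<subseteq> S" "g holomorphic_on ball \<alpha> r"
      "\<And>w. w \<in> ball \<alpha> r \<Longrightarrow> a w = (w - \<alpha>)^m * g w"
      "\<And>w. w \<in> ball \<alpha> r \<Longrightarrow> g w \<noteq> 0"
      by (rule local_order[OF a S aS nz]) (rule that, assumption+)
    define \<rho>' where "\<rho>' = min \<rho> r"
    have r': "\<rho>' > 0" "ball \<alpha> \<rho>' \<subseteq> ball \<alpha> \<rho>" "ball \<alpha> \<rho>' \<subseteq> ball \<alpha> r"
      using c(1) g(1) by (auto simp: \<rho>'_def)
    have anz: "a w \<noteq> 0" if "w \<in> ball \<alpha> \<rho>'" "w \<noteq> \<alpha>" for w
      using g(4,5) r'(3) that by auto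
    have cc: "continuous_on (ball \<alpha> \<rho>) c" using c(2) holomorphic_on_imp_continuous_on by blast
    have "isCont c \<alpha>" using cc c(1) continuous_on_eq_continuous_at[of "ball \<alpha> \<rho>" c] by simp
    then have lc: "(c \<longlongrightarrow> c \<alpha>) (at \<alpha>)" by (simp add: isCont_def)
    have ev: "eventually (\<lambda>w. w \<in> ball \<alpha> \<rho>' \<and> w \<noteq> \<alpha>) (at \<alpha>)"
      using r'(1) eventually_at_in_open[of "ball \<alpha> \<rho>'" \<alpha>] by simp
    have ev2: "eventually (\<lambda>w. c w = f w / a w) (at \<alpha>)"
      using ev by eventually_elim (use anz c(3) r'(2) in auto)
    have "((\<lambda>w. f w / a w) \<longlongrightarrow> c \<alpha>) (at \<alpha>)" using tendsto_cong[OF ev2] lc by simp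
    then have "Lim (at \<alpha>) (\<lambda>w. f w / a w) = c \<alpha>" by (intro tendsto_Lim) auto
    then have bc: "b z = c z" if "z \<in> ball \<alpha> \<rho>'" for z
      using that anz[of z] c(3)[of z] r'(2) True by (cases "z = \<alpha>") (auto simp: b_def)
    have H: "ball \<alpha> \<rho>' \<subseteq> S" "c holomorphic_on ball \<alpha> \<rho>'"
      "\<forall>z\<in>ball \<alpha> \<rho>'. f z = a z * c z \<and> b z = c z"
      using r' g(2) holomorphic_on_subset[OF c(2) r'(2)] c(3) bc by auto
    show ?thesis using r'(1) H by blast
  qed
  have "b holomorphic_on S"
  proof (rule hol_local[OF S(1)])
    fix x assume "x \<in> S"
    then obtain \<rho> c where "\<rho> > 0" "c holomorphic_on ball x \<rho>" "\<forall>z\<in>ball x \<rho>. b z = c z"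
      using loc2 by blast
    then show "\<exists>\<rho>>0. b holomorphic_on ball x \<rho>"
      using holomorphic_transform by metis
  qed
  moreover have "\<forall>z\<in>S. f z = a z * b z"
  proof
    fix z assume "z \<in> S"
    then obtain \<rho> c where "\<rho> > 0" "\<forall>w\<in>ball z \<rho>. f w = a w * c w \<and> b w = c w"
      using loc2 by blast
    then show "f z = a z * b z" by auto
  qed
  ultimately show ?thesis by blast
qed


lemma taylor_split:
  fixes G :: "complex \<Rightarrow> complex"
  assumes G: "G holomorphic_on ball \<alpha> r"
  defines "c \<equiv> (\<lambda>n. (deriv ^^ n) G \<alpha> / fact n)"
  shows "\<exists>R. R holomorphic_on ball \<alpha> r \<and>
     (\<forall>z\<in>ball \<alpha> r. G z = (\<Sum>n<m. c n * (z-\<alpha>)^n) + (z-\<alpha>)^m * R z)"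
proof -
  define R where "R z = (\<Sum>n. c (n+m) * (z-\<alpha>)^n)" for z
  have s1: "(\<lambda>n. c n * (z-\<alpha>)^n) sums G z" if "z \<in> ball \<alpha> r" for z
    using holomorphic_power_series[OF G that] by (simp add: c_def)
  have sR: "(\<lambda>n. c (n+m) * (z-\<alpha>)^n) sums R z" if z: "z \<in> ball \<alpha> r" for z
  proof (cases "z = \<alpha>")
    case True
    have "(\<lambda>n. c (n+m) * 0^n) sums c (0+m)" by (rule powser_sums_zero)
    then show ?thesis using True by (simp add: R_def sums_iff)
  next
    case False
    have "(\<lambda>n. c (n+m) * (z-\<alpha>)^(n+m)) sums (G z - (\<Sum>n<m. c n * (z-\<alpha>)^n))"
      using sums_split_initial_segment[OF s1[OF z], of m] by simp
    then have "(\<lambda>n. inverse ((z-\<alpha>)^m) * (c (n+m) * (z-\<alpha>)^(n+m))) sums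
        (inverse ((z-\<alpha>)^m) * (G z - (\<Sum>n<m. c n * (z-\<alpha>)^n)))"
      by (rule sums_mult)
    moreover have "inverse ((z-\<alpha>)^m) * (c (n+m) * (z-\<alpha>)^(n+m)) = c (n+m) * (z-\<alpha>)^n" for n
      using False by (simp add: power_add field_simps)
    ultimately have "(\<lambda>n. c (n+m) * (z-\<alpha>)^n) sums (inverse ((z-\<alpha>)^m) * (G z - (\<Sum>n<m. c n * (z-\<alpha>)^n)))"
      by simp
    then show ?thesis by (simp add: R_def sums_iff)
  qed
  have "R holomorphic_on ball \<alpha> r"
    by (rule power_series_holomorphic[of _ _ "\<lambda>n. c (n+m)"]) (use sR in auto)
  moreover have "G z = (\<Sum>n<m. c n * (z-\<alpha>)^n) + (z-\<alpha>)^m * R z" if z: "z \<in> ball \<alpha> r" for z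
  proof -
    have a1: "(\<lambda>n. c (n+m) * (z-\<alpha>)^(n+m)) sums (G z - (\<Sum>n<m. c n * (z-\<alpha>)^n))"
      using sums_split_initial_segment[OF s1[OF z], of m] by simp
    have "(\<lambda>n. (z-\<alpha>)^m * (c (n+m) * (z-\<alpha>)^n)) sums ((z-\<alpha>)^m * R z)"
      by (rule sums_mult[OF sR[OF z]])
    moreover have "(z-\<alpha>)^m * (c (n+m) * (z-\<alpha>)^n) = c (n+m) * (z-\<alpha>)^(n+m)" for n
      by (simp add: power_add mult_ac)
    ultimately have "(\<lambda>n. c (n+m) * (z-\<alpha>)^(n+m)) sums ((z-\<alpha>)^m * R z)" by simp
    with a1 have "G z - (\<Sum>n<m. c n * (z-\<alpha>)^n) = (z-\<alpha>)^m * R z" using sums_unique2 by blast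
    then show ?thesis by (simp add: algebra_simps)
  qed
  ultimately show ?thesis by blast
qed

lemma approx_entire:
  fixes f :: "complex \<Rightarrow> complex"
  assumes f: "f holomorphic_on ball 0 R" and r: "0 \<le> r" "r < R" and e: "e > 0"
  shows "\<exists>T. T holomorphic_on UNIV \<and> (\<forall>z\<in>cball 0 r. norm (f z - T z) \<le> e)"
proof -
  define c where "c n = (deriv ^^ n) f 0 / fact n" for n
  define r' where "r' = (r + R) / 2"
  have r': "r < r'" "r' < R" using r by (auto simp: r'_def)
  have s1: "(\<lambda>n. c n * z^n) sums f z" if "z \<in> ball 0 R" for z
    using holomorphic_power_series[OF f that] by (simp add: c_def)
  have "complex_of_real r' \<in> ball 0 R" using r r' by auto
  then have "summable (\<lambda>n. c n * (complex_of_real r')^n)" using s1 sums_summable by blast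
  then have "conv_radius c \<ge> norm (complex_of_real r')" by (rule conv_radius_geI)
  then have c1: "ereal r' \<le> conv_radius c" using r r' by auto
  have "ereal r < ereal r'" using r'(1) by simp
  then have cr: "ereal r < conv_radius c" using c1 by (rule less_le_trans)
  have ul: "uniform_limit (cball 0 r) (\<lambda>n x. \<Sum>i<n. c i * (x - 0) ^ i) (\<lambda>x. suminf (\<lambda>i. c i * (x - 0) ^ i)) sequentially"
    by (rule powser_uniform_limit[OF cr])
  have eqf: "suminf (\<lambda>i. c i * (x - 0) ^ i) = f x" if "x \<in> cball 0 r" for x
    using s1[of x] that r by (simp add: sums_iff)
  from uniform_limitD[OF ul e] obtain N where N: "\<forall>x\<in>cball 0 r. dist (\<Sum>i<N. c i * (x - 0) ^ i) (suminf (\<lambda>i. c i * (x - 0) ^ i)) < e"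
    by (auto simp: eventually_sequentially)
  show ?thesis
  proof (intro exI conjI ballI)
    show "(\<lambda>x. \<Sum>i<N. c i * x ^ i) holomorphic_on UNIV" by (intro holomorphic_intros)
    fix z :: complex assume z: "z \<in> cball 0 r"
    have "dist (\<Sum>i<N. c i * (z - 0) ^ i) (suminf (\<lambda>i. c i * (z - 0) ^ i)) < e" using N z by blast
    then have "dist (\<Sum>i<N. c i * (z - 0) ^ i) (f z) < e" using eqf[OF z] by simp
    then show "norm (f z - (\<Sum>i<N. c i * z ^ i)) \<le> e" by (simp add: dist_norm norm_minus_commute)
  qed
qed


lemma zeros_finite:
  fixes a :: "complex \<Rightarrow> complex"
  assumes a: "a holomorphic_on ball 0 1" and nz: "\<exists>w\<in>ball 0 1. a w \<noteq> 0" and R: "R < 1"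
  shows "finite {z \<in> cball 0 R. a z = 0}"
proof (cases "a constant_on ball 0 1")
  case True
  then obtain c where c: "\<And>x. x \<in> ball 0 1 \<Longrightarrow> a x = c" unfolding constant_on_def by blast
  have "c \<noteq> 0" using nz c by auto
  then have e: "{z \<in> cball 0 R. a z = 0} = {}" using c R by auto
  show ?thesis by (subst e) (rule finite.emptyI)
next
  case False
  have "cball 0 R \<subseteq> ball (0::complex) 1" using R by auto
  then show ?thesis
    by (intro holomorphic_compact_finite_zeros[OF a open_ball connected_ball compact_cball _ False])
qed

lemma zeros_countable:
  fixes a :: "complex \<Rightarrow> complex"
  assumes a: "a holomorphic_on ball 0 1" and nz: "\<exists>w\<in>ball 0 1. a w \<noteq> 0"
  shows "countable {z \<in> ball 0 1. a z = 0}"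
proof -
  have "{z \<in> ball 0 1. a z = 0} \<subseteq> (\<Union>k\<in>(UNIV::nat set). {z \<in> cball 0 (1 - 1/(real k+2)). a z = 0})"
  proof
    fix z assume z: "z \<in> {z \<in> ball 0 1. a z = 0}"
    then have "norm z < 1" by simp
    then obtain k :: nat where k: "1 / (1 - norm z) < real k" using reals_Archimedean2 by blast
    have "1 / (real k + 2) \<le> 1 - norm z"
    proof -
      have p: "1 - norm z > 0" using \<open>norm z < 1\<close> by simp
      then have "1 < real k * (1 - norm z)" using k by (simp add: field_simps)
      then have "1 \<le> (real k + 2) * (1 - norm z)" using p by (simp add: algebra_simps)
      then show ?thesis by (simp add: field_simps)
    qed
    then show "z \<in> (\<Union>k\<in>(UNIV::nat set). {z \<in> cball 0 (1 - 1/(real k+2)). a z = 0})"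
      using z by (auto intro!: exI[of _ k])
  qed
  moreover have "countable (\<Union>k\<in>(UNIV::nat set). {z \<in> cball 0 (1 - 1/(real k+2)). a z = 0})"
    apply (rule countable_UN)
     apply simp
    apply (rule countable_finite)
    apply (rule zeros_finite[OF a nz])
    by (simp add: add_pos_pos)
  ultimately show ?thesis using countable_subset by blast
qed

locale interp =
  fixes a :: "complex \<Rightarrow> complex" and J :: "complex \<Rightarrow> complex \<Rightarrow> complex" and \<rho>J :: "complex \<Rightarrow> real"
  assumes a_hol: "a holomorphic_on ball 0 1" and a_nz: "\<exists>w\<in>ball 0 1. a w \<noteq> 0"
    and J: "\<And>\<alpha>. \<alpha> \<in> ball 0 1 \<Longrightarrow> a \<alpha> = 0 \<Longrightarrow> \<rho>J \<alpha> > 0 \<and> J \<alpha> holomorphic_on ball \<alpha> (\<rho>J \<alpha>)"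
begin

definition "Z = {z \<in> ball 0 1. a z = 0}"

definition "FP \<alpha> m A r \<longleftrightarrow> 0 < r \<and> ball \<alpha> r \<subseteq> ball 0 1 \<and> A holomorphic_on ball 0 1 \<and>
   (\<forall>z\<in>ball 0 1. a z = (z-\<alpha>)^m * A z) \<and> (\<forall>z\<in>ball \<alpha> r. A z \<noteq> 0)"

lemma FP_ex: assumes "\<alpha> \<in> Z" shows "\<exists>t. FP \<alpha> (fst t) (fst (snd t)) (snd (snd t))"
proof -
  have aD: "\<alpha> \<in> ball 0 1" using assms by (simp add: Z_def)
  obtain m r g where g: "0 < r" "ball \<alpha> r \<subseteq> ball 0 1" "g holomorphic_on ball \<alpha> r"
      "\<And>w. w \<in> ball \<alpha> r \<Longrightarrow> a w = (w - \<alpha>)^m * g w"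
      "\<And>w. w \<in> ball \<alpha> r \<Longrightarrow> g w \<noteq> 0"
    by (rule local_order[OF a_hol open_ball connected_ball aD a_nz]) (rule that, assumption+)
  obtain G where G: "G holomorphic_on ball 0 1" "\<forall>z\<in>ball 0 1. a z = (z-\<alpha>)^m * G z" "\<forall>z\<in>ball \<alpha> r. G z = g z"
    using glob_factor[OF open_ball a_hol g(1,2,3,4)] by blast
  have "FP \<alpha> m G r" unfolding FP_def using g G by auto
  then show ?thesis by (intro exI[of _ "(m, G, r)"]) simp
qed

definition "fac \<alpha> = (SOME t. FP \<alpha> (fst t) (fst (snd t)) (snd (snd t)))"
definition "m \<alpha> = fst (fac \<alpha>)"
definition "A \<alpha> = fst (snd (fac \<alpha>))"
definition "rA \<alpha> = snd (snd (fac \<alpha>))"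

lemma fac: assumes "\<alpha> \<in> Z" shows "FP \<alpha> (m \<alpha>) (A \<alpha>) (rA \<alpha>)"
  using someI_ex[OF FP_ex[OF assms]] by (simp add: fac_def m_def A_def rA_def)

lemma fac_rA: "\<alpha> \<in> Z \<Longrightarrow> 0 < rA \<alpha>" and fac_ball: "\<alpha> \<in> Z \<Longrightarrow> ball \<alpha> (rA \<alpha>) \<subseteq> ball 0 1"
  and fac_hol: "\<alpha> \<in> Z \<Longrightarrow> A \<alpha> holomorphic_on ball 0 1"
  and fac_eq: "\<alpha> \<in> Z \<Longrightarrow> z \<in> ball 0 1 \<Longrightarrow> a z = (z-\<alpha>)^(m \<alpha>) * A \<alpha> z"
  and fac_nz: "\<alpha> \<in> Z \<Longrightarrow> z \<in> ball \<alpha> (rA \<alpha>) \<Longrightarrow> A \<alpha> z \<noteq> 0"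
  using fac unfolding FP_def by blast+

definition "r1 \<alpha> = min (\<rho>J \<alpha>) (rA \<alpha>)"
definition "G \<alpha> z = J \<alpha> z / A \<alpha> z"
definition "c \<alpha> n = (deriv ^^ n) (G \<alpha>) \<alpha> / fact n"
definition "Pp \<alpha> z = (\<Sum>n<m \<alpha>. c \<alpha> n * (z-\<alpha>)^n)"
definition "F \<alpha> z = Pp \<alpha> z / (z-\<alpha>)^(m \<alpha>)"

lemma r1_pos: "\<alpha> \<in> Z \<Longrightarrow> r1 \<alpha> > 0"
  using J[of \<alpha>] fac_rA[of \<alpha>] by (auto simp: r1_def Z_def)

lemma G_hol: assumes "\<alpha> \<in> Z" shows "G \<alpha> holomorphic_on ball \<alpha> (r1 \<alpha>)"
proof -
  have "ball \<alpha> (r1 \<alpha>) \<subseteq> ball \<alpha> (\<rho>J \<alpha>)" "ball \<alpha> (r1 \<alpha>) \<subseteq> ball \<alpha> (rA \<alpha>)"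
    by (auto simp: r1_def)
  moreover have "J \<alpha> holomorphic_on ball \<alpha> (\<rho>J \<alpha>)" using J[of \<alpha>] assms by (auto simp: Z_def)
  ultimately show ?thesis
    unfolding G_def using fac_hol[OF assms] fac_ball[OF assms] fac_nz[OF assms]
    by (intro holomorphic_intros) (auto intro: holomorphic_on_subset)
qed

lemma R_ex: assumes "\<alpha> \<in> Z"
  shows "\<exists>R. R holomorphic_on ball \<alpha> (r1 \<alpha>) \<and> (\<forall>z\<in>ball \<alpha> (r1 \<alpha>). G \<alpha> z = Pp \<alpha> z + (z-\<alpha>)^(m \<alpha>) * R z)"
  using taylor_split[OF G_hol[OF assms], of "m \<alpha>"] unfolding Pp_def c_def by blast

definition "Rt \<alpha> = (SOME R. R holomorphic_on ball \<alpha> (r1 \<alpha>) \<and> (\<forall>z\<in>ball \<alpha> (r1 \<alpha>). G \<alpha> z = Pp \<alpha> z + (z-\<alpha>)^(m \<alpha>) * R z))"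

lemma R_hol: "\<alpha> \<in> Z \<Longrightarrow> Rt \<alpha> holomorphic_on ball \<alpha> (r1 \<alpha>)"
  and R_eq: "\<alpha> \<in> Z \<Longrightarrow> z \<in> ball \<alpha> (r1 \<alpha>) \<Longrightarrow> G \<alpha> z = Pp \<alpha> z + (z-\<alpha>)^(m \<alpha>) * Rt \<alpha> z"
  using someI_ex[OF R_ex] unfolding Rt_def by blast+

lemma Pp_hol: "Pp \<alpha> holomorphic_on S"
  unfolding Pp_def by (intro holomorphic_intros)

lemma F_hol: "F \<alpha> holomorphic_on (S - {\<alpha>})"
  unfolding F_def by (intro holomorphic_intros Pp_hol) auto

lemma aF: "\<alpha> \<in> Z \<Longrightarrow> z \<in> ball 0 1 \<Longrightarrow> z \<noteq> \<alpha> \<Longrightarrow> a z * F \<alpha> z = A \<alpha> z * Pp \<alpha> z"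
  using fac_eq[of \<alpha> z] by (simp add: F_def)

lemma Z_countable: "countable Z"
  unfolding Z_def by (rule zeros_countable[OF a_hol a_nz])

definition "idx = to_nat_on Z"
definition "e n = inv_into Z idx n"
definition "I = idx ` Z"

lemma idx_inj: "inj_on idx Z" unfolding idx_def using Z_countable by blast
lemma e_I: "n \<in> I \<Longrightarrow> e n \<in> Z" unfolding e_def I_def by (auto intro: inv_into_into)
lemma idx_e: "n \<in> I \<Longrightarrow> idx (e n) = n" unfolding e_def I_def by (rule f_inv_into_f)
lemma e_idx: "\<alpha> \<in> Z \<Longrightarrow> e (idx \<alpha>) = \<alpha>" unfolding e_def using idx_inj by simp
lemma idx_I: "\<alpha> \<in> Z \<Longrightarrow> idx \<alpha> \<in> I" unfolding I_def by simp

end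


context interp begin

lemma Z_D: "\<alpha> \<in> Z \<Longrightarrow> \<alpha> \<in> ball 0 1" and Z_a: "\<alpha> \<in> Z \<Longrightarrow> a \<alpha> = 0"
  by (auto simp: Z_def)

lemma T_ex:
  assumes n: "n \<in> I" "e n \<noteq> 0"
  shows "\<exists>T. T holomorphic_on UNIV \<and> (\<forall>z\<in>cball 0 (norm (e n)^2). norm (F (e n) z - T z) \<le> (1/2)^n)"
proof -
  define \<alpha> where "\<alpha> = e n"
  have aZ: "\<alpha> \<in> Z" using e_I[OF n(1)] by (simp add: \<alpha>_def)
  have n1: "norm \<alpha> < 1" using Z_D[OF aZ] by simp
  have n0: "norm \<alpha> > 0" using n(2) by (simp add: \<alpha>_def)
  have "F \<alpha> holomorphic_on (ball 0 (norm \<alpha>) - {\<alpha>})" by (rule F_hol)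
  moreover have "ball 0 (norm \<alpha>) - {\<alpha>} = ball 0 (norm \<alpha>)" by auto
  ultimately have hol: "F \<alpha> holomorphic_on ball 0 (norm \<alpha>)" by simp
  have "norm \<alpha> ^ 2 < norm \<alpha>" using n0 n1 by (simp add: power2_eq_square)
  then show ?thesis using approx_entire[OF hol, of "norm \<alpha> ^ 2" "(1/2)^n"] by (simp add: \<alpha>_def)
qed

definition "T n = (if n \<in> I \<and> e n \<noteq> 0 then (SOME T. T holomorphic_on UNIV \<and>
   (\<forall>z\<in>cball 0 (norm (e n)^2). norm (F (e n) z - T z) \<le> (1/2)^n)) else (\<lambda>_. 0))"

lemma T_prop: "n \<in> I \<Longrightarrow> e n \<noteq> 0 \<Longrightarrow> T n holomorphic_on UNIV \<and>
   (\<forall>z\<in>cball 0 (norm (e n)^2). norm (F (e n) z - T n z) \<le> (1/2)^n)"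
  using someI_ex[OF T_ex] unfolding T_def by simp

lemma T_hol: "T n holomorphic_on S"
proof (cases "n \<in> I \<and> e n \<noteq> 0")
  case True then show ?thesis using T_prop[of n] holomorphic_on_subset by blast
next
  case False
  then have "T n = (\<lambda>_. 0)" unfolding T_def by auto
  then show ?thesis by simp
qed

definition "trm n z = (if n \<in> I then A (e n) z * Pp (e n) z - a z * T n z else 0)"

lemma trm_hol: "trm n holomorphic_on ball 0 1"
proof (cases "n \<in> I")
  case True
  then have "A (e n) holomorphic_on ball 0 1" using fac_hol e_I by blast
  moreover have "trm n = (\<lambda>z. A (e n) z * Pp (e n) z - a z * T n z)" using True by (auto simp: trm_def)
  ultimately show ?thesis
    by (simp only:) (intro holomorphic_intros Pp_hol T_hol a_hol)
next
  case False
  then have "trm n = (\<lambda>_. 0)" by (auto simp: trm_def)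
  then show ?thesis by simp
qed

lemma trm_eq: "n \<in> I \<Longrightarrow> z \<in> ball 0 1 \<Longrightarrow> z \<noteq> e n \<Longrightarrow> trm n z = a z * (F (e n) z - T n z)"
  using aF[OF e_I, of n z] by (simp add: trm_def algebra_simps)

lemma ev_far:
  assumes R: "0 \<le> R" "R < 1"
  shows "eventually (\<lambda>n. n \<in> I \<longrightarrow> e n \<noteq> 0 \<and> R < norm (e n)^2) sequentially"
proof -
  define B where "B = {n\<in>I. \<not> (e n \<noteq> 0 \<and> R < norm (e n)^2)}"
  have "B \<subseteq> idx ` {z \<in> cball 0 (sqrt R). a z = 0}"
  proof
    fix n assume nB: "n \<in> B"
    then have nI: "n \<in> I" and c: "e n = 0 \<or> norm (e n)^2 \<le> R" by (auto simp: B_def)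
    have "norm (e n) \<le> sqrt R"
      using c R by (auto intro: real_le_rsqrt)
    then have "e n \<in> {z \<in> cball 0 (sqrt R). a z = 0}" using Z_a[OF e_I[OF nI]] by simp
    then show "n \<in> idx ` {z \<in> cball 0 (sqrt R). a z = 0}" using idx_e[OF nI] by force
  qed
  moreover have "finite {z \<in> cball 0 (sqrt R). a z = 0}"
    using R by (intro zeros_finite[OF a_hol a_nz]) (simp add: real_sqrt_less_iff[of R 1, simplified])
  ultimately have "finite B" using finite_subset by blast
  then obtain k where "B \<subseteq> {..<k}" using finite_nat_bounded by blast
  then have "\<forall>n\<ge>k. n \<notin> B" by auto
  then show ?thesis unfolding eventually_sequentially B_def by blast
qed

lemma a_bound: "\<exists>B\<ge>0. \<forall>z\<in>cball 0 R. norm (a z) \<le> B" if "R < 1" for R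
proof -
  have "cball 0 R \<subseteq> ball (0::complex) 1" using that by auto
  then have "continuous_on (cball 0 R) a"
    using a_hol holomorphic_on_imp_continuous_on holomorphic_on_subset by blast
  then have "compact (a ` cball 0 R)" by (rule compact_continuous_image) simp
  then have "bounded (a ` cball 0 R)" by (rule compact_imp_bounded)
  then obtain B where "\<forall>x\<in>a ` cball 0 R. norm x \<le> B" unfolding bounded_iff by blast
  then show ?thesis by (intro exI[of _ "max B 0"]) auto
qed

lemma trm_bound:
  assumes R: "0 \<le> R" "R < 1"
  shows "\<exists>B. eventually (\<lambda>n. \<forall>z\<in>cball 0 R. norm (trm n z) \<le> B * (1/2)^n) sequentially"
proof -
  obtain B where B: "B \<ge> 0" "\<And>z. z\<in>cball 0 R \<Longrightarrow> norm (a z) \<le> B" using a_bound[OF R(2)] by blast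
  have "eventually (\<lambda>n. \<forall>z\<in>cball 0 R. norm (trm n z) \<le> B * (1/2)^n) sequentially"
    using ev_far[OF R]
  proof eventually_elim
    case (elim n)
    show ?case
    proof
      fix z :: complex assume z: "z \<in> cball 0 R"
      show "norm (trm n z) \<le> B * (1/2)^n"
      proof (cases "n \<in> I")
        case False then show ?thesis using B by (simp add: trm_def)
      next
        case True
        have en: "e n \<noteq> 0" "R < norm (e n)^2" using elim True by auto
        have n1: "norm (e n) < 1" using Z_D[OF e_I[OF True]] by simp
        have "norm (e n)^2 < norm (e n)" using en n1 by (simp add: power2_eq_square)
        moreover have nz: "norm z \<le> R" using z by simp
        ultimately have zne: "z \<noteq> e n" using en by auto
        have zc: "z \<in> cball 0 (norm (e n)^2)" using nz en by simp
        have zD: "z \<in> ball 0 1" using nz R by simp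
        have "norm (trm n z) = norm (a z) * norm (F (e n) z - T n z)"
          using trm_eq[OF True zD zne] by (simp add: norm_mult)
        also have "\<dots> \<le> B * (1/2)^n"
          using T_prop[OF True en(1)] zc B(1) B(2)[OF z] by (intro mult_mono) auto
        finally show ?thesis .
      qed
    qed
  qed
  then show ?thesis by blast
qed

lemma trm_unif:
  assumes R: "0 \<le> R" "R < 1"
  shows "uniform_limit (cball 0 R) (\<lambda>N z. \<Sum>n<N. trm n z) (\<lambda>z. \<Sum>n. trm n z) sequentially"
proof -
  obtain B where B: "eventually (\<lambda>n. \<forall>z\<in>cball 0 R. norm (trm n z) \<le> B * (1/2)^n) sequentially"
    using trm_bound[OF R] by blast
  show ?thesis
    by (rule Weierstrass_m_test_ev[OF B]) (intro summable_mult summable_geometric, simp)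
qed

definition "d z = (\<Sum>n. trm n z)"

lemma d_hol: "d holomorphic_on ball 0 1"
proof -
  have "(\<lambda>z. \<Sum>n. trm n z) holomorphic_on ball 0 1"
  proof (rule holomorphic_uniform_sequence[OF open_ball])
    fix N show "(\<lambda>z. \<Sum>n<N. trm n z) holomorphic_on ball 0 1"
      by (intro holomorphic_intros trm_hol)
  next
    fix x :: complex assume x: "x \<in> ball 0 1"
    define R where "R = (1 + norm x) / 2"
    define \<delta> where "\<delta> = (1 - norm x) / 2"
    have R: "0 \<le> R" "R < 1" using x by (auto simp: R_def)
    have \<delta>: "0 < \<delta>" using x by (auto simp: \<delta>_def)
    have sub: "cball x \<delta> \<subseteq> cball 0 R"
    proof
      fix y assume "y \<in> cball x \<delta>"
      then have "norm (y - x) \<le> \<delta>" by (simp add: dist_norm norm_minus_commute)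
      then have "norm y \<le> norm x + \<delta>" using norm_triangle_sub[of y x] by linarith
      then have "norm y \<le> (1 + norm x)/2" unfolding \<delta>_def by (simp add: field_simps)
      then show "y \<in> cball 0 R" by (simp add: R_def)
    qed
    have "cball 0 R \<subseteq> ball (0::complex) 1" using R by auto
    then show "\<exists>d>0. cball x d \<subseteq> ball 0 1 \<and> uniform_limit (cball x d) (\<lambda>N z. \<Sum>n<N. trm n z) (\<lambda>z. \<Sum>n. trm n z) sequentially"
      using \<delta> sub uniform_limit_on_subset[OF trm_unif[OF R] sub] by (intro exI[of _ \<delta>]) auto
  qed
  then show ?thesis by (simp add: d_def[abs_def])
qed

end


context interp begin

definition "Qk k n z = (if n \<in> I \<and> n \<noteq> k then F (e n) z - T n z else 0)"

lemma Q_bound: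
  assumes R: "0 \<le> R" "R < 1"
  shows "eventually (\<lambda>n. \<forall>z\<in>cball 0 R. norm (Qk k n z) \<le> (1/2)^n) sequentially"
  using ev_far[OF R]
proof eventually_elim
  case (elim n)
  show ?case
  proof
    fix z :: complex assume z: "z \<in> cball 0 R"
    show "norm (Qk k n z) \<le> (1/2)^n"
    proof (cases "n \<in> I \<and> n \<noteq> k")
      case True
      have en: "e n \<noteq> 0" "R < norm (e n)^2" using elim True by auto
      have "z \<in> cball 0 (norm (e n)^2)" using z en by simp
      then show ?thesis using T_prop[OF _ en(1)] True by (simp add: Qk_def)
    qed (auto simp: Qk_def)
  qed
qed

lemma Q_summable: assumes "z \<in> ball 0 1" shows "summable (\<lambda>n. Qk k n z)"
proof (rule summable_comparison_test_ev)
  have "eventually (\<lambda>n. \<forall>w\<in>cball 0 (norm z). norm (Qk k n w) \<le> (1/2)^n) sequentially"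
    using assms by (intro Q_bound) auto
  then show "eventually (\<lambda>n. norm (Qk k n z) \<le> (1/2)^n) sequentially"
    by eventually_elim auto
  show "summable (\<lambda>n. (1/2::real)^n)" by (rule summable_geometric) simp
qed

lemma d_local:
  assumes aZ: "\<alpha> \<in> Z"
  shows "\<exists>\<rho>>0. \<exists>w. w holomorphic_on ball \<alpha> \<rho> \<and> (\<forall>z\<in>ball \<alpha> \<rho>. d z - J \<alpha> z = a z * w z)"
proof -
  define k where "k = idx \<alpha>"
  have kI: "k \<in> I" and ek: "e k = \<alpha>" using idx_I[OF aZ] e_idx[OF aZ] by (auto simp: k_def)
  define \<delta> where "\<delta> = r1 \<alpha>"
  have \<delta>: "\<delta> > 0" using r1_pos[OF aZ] by (simp add: \<delta>_def)
  have bA: "ball \<alpha> \<delta> \<subseteq> ball \<alpha> (rA \<alpha>)" and bJ: "ball \<alpha> \<delta> \<subseteq> ball \<alpha> (\<rho>J \<alpha>)"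
    by (auto simp: \<delta>_def r1_def)
  have bD: "ball \<alpha> \<delta> \<subseteq> ball 0 1" using bA fac_ball[OF aZ] by blast
  have anz: "a z \<noteq> 0" if "z \<in> ball \<alpha> \<delta>" "z \<noteq> \<alpha>" for z
  proof -
    have z1: "z \<in> ball \<alpha> (rA \<alpha>)" "z \<in> ball 0 1" using that bA bD by auto
    have "(z-\<alpha>)^(m \<alpha>) \<noteq> 0" using that(2) by simp
    then show ?thesis using fac_eq[OF aZ z1(2)] fac_nz[OF aZ z1(1)] by simp
  qed
  have far: "e n \<notin> ball \<alpha> \<delta>" if "n \<in> I" "n \<noteq> k" for n
  proof
    assume en: "e n \<in> ball \<alpha> \<delta>"
    have "e n \<noteq> \<alpha>" using idx_e[OF that(1)] that(2) by (auto simp: k_def)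
    then show False using anz[OF en] Z_a[OF e_I[OF that(1)]] by simp
  qed
  have Qhol: "Qk k n holomorphic_on ball \<alpha> \<delta>" for n
  proof (cases "n \<in> I \<and> n \<noteq> k")
    case True
    then have "ball \<alpha> \<delta> \<subseteq> UNIV - {e n}" using far by auto
    then have "F (e n) holomorphic_on ball \<alpha> \<delta>" using F_hol holomorphic_on_subset by blast
    moreover have "Qk k n = (\<lambda>z. F (e n) z - T n z)" using True by (auto simp: Qk_def)
    ultimately show ?thesis by (simp only:) (intro holomorphic_intros T_hol)
  next
    case False
    then have "Qk k n = (\<lambda>_. 0)" by (auto simp: Qk_def)
    then show ?thesis by simp
  qed
  define SQ where "SQ z = (\<Sum>n. Qk k n z)" for z
  have SQhol: "SQ holomorphic_on ball \<alpha> \<delta>"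
  proof -
    have "(\<lambda>z. \<Sum>n. Qk k n z) holomorphic_on ball \<alpha> \<delta>"
    proof (rule holomorphic_uniform_sequence[OF open_ball])
      fix N show "(\<lambda>z. \<Sum>n<N. Qk k n z) holomorphic_on ball \<alpha> \<delta>"
        by (intro holomorphic_intros Qhol)
    next
      fix x :: complex assume x: "x \<in> ball \<alpha> \<delta>"
      then have xD: "norm x < 1" using bD by auto
      define R where "R = (1 + norm x) / 2"
      define \<delta>' where "\<delta>' = min ((\<delta> - dist \<alpha> x) / 2) ((1 - norm x) / 2)"
      have R: "0 \<le> R" "R < 1" using xD by (auto simp: R_def)
      have \<delta>': "0 < \<delta>'" using x xD by (auto simp: \<delta>'_def)
      have sub1: "cball x \<delta>' \<subseteq> ball \<alpha> \<delta>"
      proof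
        fix y assume "y \<in> cball x \<delta>'"
        then have "dist x y \<le> (\<delta> - dist \<alpha> x) / 2" by (auto simp: \<delta>'_def)
        moreover have "dist \<alpha> y \<le> dist \<alpha> x + dist x y" by (rule dist_triangle)
        moreover have "dist \<alpha> x < \<delta>" using x by simp
        ultimately show "y \<in> ball \<alpha> \<delta>" by simp
      qed
      have sub2: "cball x \<delta>' \<subseteq> cball 0 R"
      proof
        fix y assume "y \<in> cball x \<delta>'"
        then have "norm (y - x) \<le> (1 - norm x) / 2" by (auto simp: \<delta>'_def dist_norm norm_minus_commute)
        then have "norm y \<le> norm x + (1 - norm x) / 2" using norm_triangle_sub[of y x] by linarith
        then have "norm y \<le> (1 + norm x)/2" by (simp add: field_simps)
        then show "y \<in> cball 0 R" by (simp add: R_def)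
      qed
      have ul: "uniform_limit (cball 0 R) (\<lambda>N z. \<Sum>n<N. Qk k n z) (\<lambda>z. \<Sum>n. Qk k n z) sequentially"
        by (rule Weierstrass_m_test_ev[OF Q_bound[OF R]]) (rule summable_geometric, simp)
      show "\<exists>d>0. cball x d \<subseteq> ball \<alpha> \<delta> \<and> uniform_limit (cball x d) (\<lambda>N z. \<Sum>n<N. Qk k n z) (\<lambda>z. \<Sum>n. Qk k n z) sequentially"
        using \<delta>' sub1 uniform_limit_on_subset[OF ul sub2] by blast
    qed
    then show ?thesis by (simp add: SQ_def[abs_def])
  qed
  define w where "w z = SQ z - T k z - Rt \<alpha> z" for z
  have whol: "w holomorphic_on ball \<alpha> \<delta>"
    unfolding w_def using R_hol[OF aZ] by (intro holomorphic_intros SQhol T_hol) (simp add: \<delta>_def)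
  have eq: "d z - J \<alpha> z = a z * w z" if z: "z \<in> ball \<alpha> \<delta>" for z
  proof -
    have zD: "z \<in> ball 0 1" using z bD by auto
    have t1: "a z * Qk k n z = (if n = k then 0 else trm n z)" for n
    proof (cases "n \<in> I \<and> n \<noteq> k")
      case True
      have "z \<noteq> e n" using far[of n] True z by auto
      then show ?thesis using True trm_eq[of n z] zD by (simp add: Qk_def)
    next
      case False
      then show ?thesis by (auto simp: Qk_def trm_def)
    qed
    have s1: "(\<lambda>n. a z * Qk k n z) sums (a z * SQ z)"
      unfolding SQ_def by (intro sums_mult summable_sums Q_summable zD)
    then have s2: "(\<lambda>n. if n = k then 0 else trm n z) sums (a z * SQ z)" using t1 by simp
    have s3: "(\<lambda>n. (if n = k then 0 else trm n z) + (if n = k then trm k z else 0)) sums (a z * SQ z + trm k z)"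
      by (intro sums_add s2 sums_single)
    have "(\<lambda>n. (if n = k then 0 else trm n z) + (if n = k then trm k z else 0)) = (\<lambda>n. trm n z)"
      by auto
    with s3 have "(\<lambda>n. trm n z) sums (a z * SQ z + trm k z)" by simp
    then have dz: "d z = a z * SQ z + trm k z" unfolding d_def by (simp add: sums_iff)
    have tk: "trm k z = A \<alpha> z * Pp \<alpha> z - a z * T k z" using kI ek by (simp add: trm_def)
    have zr1: "z \<in> ball \<alpha> (r1 \<alpha>)" using z by (simp add: \<delta>_def)
    have Anz: "A \<alpha> z \<noteq> 0" using fac_nz[OF aZ] bA z by auto
    have "J \<alpha> z = A \<alpha> z * G \<alpha> z" using Anz by (simp add: G_def)
    also have "\<dots> = A \<alpha> z * Pp \<alpha> z + ((z-\<alpha>)^(m \<alpha>) * A \<alpha> z) * Rt \<alpha> z"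
      using R_eq[OF aZ zr1] by (simp add: algebra_simps)
    also have "(z-\<alpha>)^(m \<alpha>) * A \<alpha> z = a z" using fac_eq[OF aZ zD] by simp
    finally have "J \<alpha> z = A \<alpha> z * Pp \<alpha> z + a z * Rt \<alpha> z" .
    then show ?thesis using dz tk by (simp add: w_def algebra_simps)
  qed
  show ?thesis using \<delta> whol eq by blast
qed

end


theorem interpolation_disc:
  fixes a :: "complex \<Rightarrow> complex" and J :: "complex \<Rightarrow> complex \<Rightarrow> complex" and \<rho>J :: "complex \<Rightarrow> real"
  assumes "a holomorphic_on ball 0 1" "\<exists>w\<in>ball 0 1. a w \<noteq> 0"
    and "\<And>\<alpha>. \<alpha> \<in> ball 0 1 \<Longrightarrow> a \<alpha> = 0 \<Longrightarrow> \<rho>J \<alpha> > 0 \<and> J \<alpha> holomorphic_on ball \<alpha> (\<rho>J \<alpha>)"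
  shows "\<exists>d. d holomorphic_on ball 0 1 \<and> (\<forall>\<alpha>\<in>ball 0 1. a \<alpha> = 0 \<longrightarrow>
     (\<exists>\<rho>>0. \<exists>w. w holomorphic_on ball \<alpha> \<rho> \<and> (\<forall>z\<in>ball \<alpha> \<rho>. d z - J \<alpha> z = a z * w z)))"
proof -
  interpret interp a J \<rho>J using assms by unfold_locales auto
  show ?thesis using d_hol d_local by (auto simp: Z_def)
qed


locale dprod =
  fixes \<alpha> :: "nat \<Rightarrow> complex" and I :: "nat set" and p :: "nat \<Rightarrow> nat"
  assumes \<alpha>_D: "\<And>n. n \<in> I \<Longrightarrow> \<alpha> n \<in> ball 0 1"
    and fin: "\<And>R. R < 1 \<Longrightarrow> finite {n\<in>I. norm (\<alpha> n) \<le> R}"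
    and p_ge: "\<And>n. n \<le> p n"
begin

definition "\<beta> n = (if \<alpha> n = 0 then 1 else \<alpha> n / of_real (norm (\<alpha> n)))"
definition "w n z = (\<alpha> n - \<beta> n) / (z - \<beta> n)"
definition "g n z = (if n \<in> I then weierstrass_factor (p n) (w n z) else 1)"
definition "f z = (\<Prod>n. g n z)"

lemma \<beta>_norm: "norm (\<beta> n) = 1"
  by (auto simp: \<beta>_def norm_divide)

lemma \<alpha>\<beta>: assumes "\<alpha> n \<noteq> 0" "norm (\<alpha> n) < 1" shows "norm (\<alpha> n - \<beta> n) = 1 - norm (\<alpha> n)"
proof -
  have "\<alpha> n - \<beta> n = of_real (norm (\<alpha> n) - 1) * \<beta> n"
    using assms by (simp add: \<beta>_def field_simps)
  moreover have "norm (of_real (norm (\<alpha> n) - 1) :: complex) = \<bar>norm (\<alpha> n) - 1\<bar>"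
    by (rule norm_of_real)
  ultimately have "norm (\<alpha> n - \<beta> n) = \<bar>norm (\<alpha> n) - 1\<bar>" by (simp only: norm_mult \<beta>_norm) simp
  then show ?thesis using assms by simp
qed

lemma z\<beta>: assumes "norm z \<le> R" shows "1 - R \<le> norm (z - \<beta> n)"
proof -
  have "norm (\<beta> n) - norm z \<le> norm (\<beta> n - z)" by (rule norm_triangle_ineq2)
  then show ?thesis using assms \<beta>_norm[of n] by (simp add: norm_minus_commute)
qed

lemma \<beta>_ne: "norm z < 1 \<Longrightarrow> z \<noteq> \<beta> n"
  using \<beta>_norm[of n] by auto

lemma g_hol: "g n holomorphic_on ball 0 1"
proof -
  have "(\<lambda>z. weierstrass_factor (p n) (w n z)) holomorphic_on ball 0 1"
    unfolding w_def by (intro holomorphic_intros) (use \<beta>_ne in auto)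
  then show ?thesis unfolding g_def by (cases "n \<in> I") auto
qed

lemma g_cont: assumes "R < 1" shows "continuous_on (cball 0 R) (g n)"
proof -
  have "cball 0 R \<subseteq> ball (0::complex) 1" using assms by auto
  then show ?thesis using continuous_on_subset[OF holomorphic_on_imp_continuous_on[OF g_hol]] by blast
qed

lemma w_small:
  assumes R: "0 \<le> R" "R < 1"
  shows "eventually (\<lambda>n. n \<in> I \<longrightarrow> (\<forall>z\<in>cball 0 R. norm (w n z) \<le> 1/2)) sequentially"
proof -
  define R' where "R' = (1 + R) / 2"
  have R': "R' < 1" "0 < R'" using R by (auto simp: R'_def)
  obtain k where k: "{n\<in>I. norm (\<alpha> n) \<le> R'} \<subseteq> {..<k}"
    using finite_nat_bounded[OF fin[OF R'(1)]] by blast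
  have "n \<in> I \<longrightarrow> (\<forall>z\<in>cball 0 R. norm (w n z) \<le> 1/2)" if "n \<ge> k" for n
  proof (intro impI ballI)
    fix z :: complex assume nI: "n \<in> I" and z: "z \<in> cball 0 R"
    have big: "R' < norm (\<alpha> n)" using k that nI by force
    have a1: "norm (\<alpha> n) < 1" using \<alpha>_D[OF nI] by simp
    have a0: "\<alpha> n \<noteq> 0" using big R' by auto
    have num: "norm (\<alpha> n - \<beta> n) \<le> (1 - R) / 2"
      using \<alpha>\<beta>[OF a0 a1] big by (simp add: R'_def)
    have den: "1 - R \<le> norm (z - \<beta> n)" using z by (intro z\<beta>) simp
    have "norm (w n z) = norm (\<alpha> n - \<beta> n) / norm (z - \<beta> n)" by (simp add: w_def norm_divide)
    also have "\<dots> \<le> ((1 - R) / 2) / (1 - R)"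
      using num den R by (intro frac_le) auto
    also have "\<dots> = 1/2" using R by simp
    finally show "norm (w n z) \<le> 1/2" .
  qed
  then show ?thesis unfolding eventually_sequentially by blast
qed

lemma g_bound:
  assumes R: "0 \<le> R" "R < 1"
  shows "eventually (\<lambda>n. \<forall>z\<in>cball 0 R. norm (g n z - 1) \<le> 3 * (1/2)^Suc n) sequentially"
  using w_small[OF R]
proof eventually_elim
  case (elim n)
  show ?case
  proof
    fix z :: complex assume z: "z \<in> cball 0 R"
    show "norm (g n z - 1) \<le> 3 * (1/2)^Suc n"
    proof (cases "n \<in> I")
      case True
      have wz: "norm (w n z) \<le> 1/2" using elim True z by blast
      have "norm (g n z - 1) \<le> 3 * norm (w n z) ^ Suc (p n)"
        using weierstrass_factor_bound[OF wz, of "p n"] True by (simp add: g_def)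
      also have "\<dots> \<le> 3 * (1/2) ^ Suc (p n)"
        using wz by (intro mult_left_mono power_mono) auto
      also have "\<dots> \<le> 3 * (1/2) ^ Suc n"
        using p_ge[of n] by (intro mult_left_mono power_decreasing) auto
      finally show ?thesis .
    qed (simp add: g_def)
  qed
qed

lemma summ_bound: "summable (\<lambda>n. 3 * (1/2::real)^Suc n)"
  by (intro summable_mult summable_Suc_iff[THEN iffD2] summable_geometric) simp

lemma conv: assumes "z \<in> ball 0 1" shows "convergent_prod (\<lambda>n. g n z)"
proof -
  have "eventually (\<lambda>n. \<forall>w\<in>cball 0 (norm z). norm (g n w - 1) \<le> 3 * (1/2)^Suc n) sequentially"
    using assms by (intro g_bound) auto
  then have "eventually (\<lambda>n. norm (norm (g n z - 1)) \<le> 3 * (1/2)^Suc n) sequentially"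
    by eventually_elim auto
  then have "summable (\<lambda>n. norm (g n z - 1))"
    by (rule summable_comparison_test_ev) (rule summ_bound)
  then have "abs_convergent_prod (\<lambda>n. g n z)" by (simp add: abs_convergent_prod_conv_summable)
  then show ?thesis by (rule abs_convergent_prod_imp_convergent_prod)
qed

lemma has_prod: "z \<in> ball 0 1 \<Longrightarrow> (\<lambda>n. g n z) has_prod f z"
  unfolding f_def by (rule convergent_prod_has_prod[OF conv])

lemma unif:
  assumes R: "0 \<le> R" "R < 1"
  shows "uniform_limit (cball 0 R) (\<lambda>N z. \<Prod>n<N. g n z) f sequentially"
proof -
  have uc: "uniformly_convergent_on (cball 0 R) (\<lambda>N z. \<Prod>n<N. g n z)"
  proof (rule uniformly_convergent_on_prod')
    show "uniformly_convergent_on (cball 0 R) (\<lambda>N z. \<Sum>n<N. norm (g n z - 1))"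
      by (rule Weierstrass_m_test'_ev[OF _ summ_bound]) (use g_bound[OF R] in \<open>simp\<close>)
  qed (use g_cont[OF R(2)] in auto)
  then obtain l where l: "uniform_limit (cball 0 R) (\<lambda>N z. \<Prod>n<N. g n z) l sequentially"
    by (auto simp: uniformly_convergent_on_def)
  also have "?this \<longleftrightarrow> uniform_limit (cball 0 R) (\<lambda>N z. \<Prod>n<N. g n z) f sequentially"
  proof (intro uniform_limit_cong)
    fix z :: complex assume z: "z \<in> cball 0 R"
    have "(\<lambda>n. \<Prod>k<n. g k z) \<longlonglongrightarrow> l z" by (rule tendsto_uniform_limitI[OF l z])
    then have "(\<lambda>n. \<Prod>k<Suc n. g k z) \<longlonglongrightarrow> l z" by (rule LIMSEQ_Suc)
    moreover have "(\<lambda>n. \<Prod>k<Suc n. g k z) \<longlonglongrightarrow> f z"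
      using convergent_prod_LIMSEQ[OF conv[of z]] z R unfolding lessThan_Suc_atMost
      by (simp add: f_def)
    ultimately show "l z = f z" by (rule LIMSEQ_unique)
  qed auto
  finally show ?thesis .
qed

lemma f_hol: "f holomorphic_on ball 0 1"
proof (rule holomorphic_uniform_sequence[OF open_ball])
  fix N show "(\<lambda>z. \<Prod>n<N. g n z) holomorphic_on ball 0 1"
    by (intro holomorphic_intros g_hol)
next
  fix x :: complex assume x: "x \<in> ball 0 1"
  define R where "R = (1 + norm x) / 2"
  define \<delta> where "\<delta> = (1 - norm x) / 2"
  have R: "0 \<le> R" "R < 1" using x by (auto simp: R_def)
  have \<delta>: "0 < \<delta>" using x by (auto simp: \<delta>_def)
  have sub: "cball x \<delta> \<subseteq> cball 0 R"
  proof
    fix y assume "y \<in> cball x \<delta>"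
    then have "norm (y - x) \<le> \<delta>" by (simp add: dist_norm norm_minus_commute)
    then have "norm y \<le> norm x + \<delta>" using norm_triangle_sub[of y x] by linarith
    then have "norm y \<le> (1 + norm x)/2" unfolding \<delta>_def by (simp add: field_simps)
    then show "y \<in> cball 0 R" by (simp add: R_def)
  qed
  have "cball 0 R \<subseteq> ball (0::complex) 1" using R by auto
  then show "\<exists>d>0. cball x d \<subseteq> ball 0 1 \<and> uniform_limit (cball x d) (\<lambda>N z. \<Prod>n<N. g n z) f sequentially"
    using \<delta> sub uniform_limit_on_subset[OF unif[OF R] sub] by (intro exI[of _ \<delta>]) auto
qed

lemma g_zero: "z \<in> ball 0 1 \<Longrightarrow> g n z = 0 \<longleftrightarrow> n \<in> I \<and> \<alpha> n = z"
proof -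
  assume z: "z \<in> ball 0 1"
  then have zb: "z - \<beta> n \<noteq> 0" using \<beta>_ne[of z n] by auto
  have "w n z = 1 \<longleftrightarrow> \<alpha> n = z" using zb by (auto simp: w_def field_simps)
  then show ?thesis by (simp add: g_def)
qed

lemma f_zero: "z \<in> ball 0 1 \<Longrightarrow> f z = 0 \<longleftrightarrow> (\<exists>n\<in>I. \<alpha> n = z)"
  using has_prod_eq_0_iff[OF has_prod, of z] g_zero[of z] by auto

end


context dprod begin

lemma w_hol: "w n holomorphic_on ball 0 1"
  unfolding w_def by (intro holomorphic_intros) (use \<beta>_ne in auto)

lemma g_factor:
  assumes "n \<in> I" "z \<in> ball 0 1"
  shows "g n z = exp (\<Sum>k=1..p n. w n z ^ k / of_nat k) / (z - \<beta> n) * (z - \<alpha> n)"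
proof -
  have zb: "z - \<beta> n \<noteq> 0" using \<beta>_ne[of z n] assms by auto
  have "1 - w n z = (z - \<alpha> n) / (z - \<beta> n)" using zb by (simp add: w_def field_simps)
  then show ?thesis using assms by (simp add: g_def weierstrass_factor_def)
qed

lemma zorder_g: assumes nI: "n \<in> I" shows "zorder (g n) (\<alpha> n) = 1"
proof -
  define h where "h z = exp (\<Sum>k=1..p n. w n z ^ k / of_nat k) / (z - \<beta> n)" for z
  have hh: "h holomorphic_on ball 0 1"
    unfolding h_def using w_hol[of n] by (intro holomorphic_intros) (use \<beta>_ne in auto)
  have hn: "h (\<alpha> n) \<noteq> 0" using \<beta>_ne[of "\<alpha> n" n] \<alpha>_D[OF nI] by (simp add: h_def)
  have "zorder (g n) (\<alpha> n) = int 1"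
  proof (rule zorder_eqI[OF open_ball \<alpha>_D[OF nI] hh hn])
    fix z assume "z \<in> ball 0 1" "z \<noteq> \<alpha> n"
    then show "g n z = h z * (z - \<alpha> n) powi int 1"
      using g_factor[OF nI] by (simp add: h_def)
  qed
  then show ?thesis by simp
qed

lemma f_ev_nz: assumes z: "z \<in> ball 0 1" shows "eventually (\<lambda>w. w \<in> ball 0 1 \<and> f w \<noteq> 0) (at z)"
proof -
  define R where "R = (1 + norm z) / 2"
  have R: "norm z < R" "R < 1" using z by (auto simp: R_def)
  define V where "V = \<alpha> ` {n\<in>I. norm (\<alpha> n) \<le> R}"
  have fV: "finite V" unfolding V_def using fin[OF R(2)] by simp
  have e1: "eventually (\<lambda>w. \<forall>v\<in>V. w \<noteq> v \<or> v = z) (at z)"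
  proof (rule eventually_ball_finite[OF fV], rule ballI)
    fix v assume "v \<in> V"
    show "eventually (\<lambda>w. w \<noteq> v \<or> v = z) (at z)"
    proof (cases "v = z")
      case False
      have "eventually (\<lambda>w. w \<noteq> v) (at z)"
        by (rule eventually_neq_at_within)
      then show ?thesis by (rule eventually_mono) simp
    qed simp
  qed
  have e2: "eventually (\<lambda>w. w \<in> ball 0 R - {z}) (at z)"
    using R by (intro eventually_at_in_open) auto
  show ?thesis using e1 e2
  proof eventually_elim
    case (elim w)
    have wD: "w \<in> ball 0 1" using elim R by auto
    have "f w \<noteq> 0"
    proof
      assume "f w = 0"
      then obtain n where n: "n \<in> I" "\<alpha> n = w" using f_zero[OF wD] by blast
      then have "\<alpha> n \<in> V" using elim unfolding V_def by auto
      then show False using elim n by auto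
    qed
    then show ?case using wD by simp
  qed
qed

lemma zorder_f:
  assumes z: "z \<in> ball 0 1"
  shows "zorder f z = int (card {n\<in>I. \<alpha> n = z})"
proof -
  define A where "A = {n\<in>I. \<alpha> n = z}"
  have "A \<subseteq> {n\<in>I. norm (\<alpha> n) \<le> norm z}" by (auto simp: A_def)
  then have fA: "finite A" using fin[of "norm z"] z finite_subset by auto
  then obtain N where N: "A \<subseteq> {..<N}" using finite_nat_bounded by blast
  interpret T: dprod "\<lambda>n. \<alpha> (n + N)" "{n. n + N \<in> I}" "\<lambda>n. p (n + N)"
  proof
    show "\<alpha> (n + N) \<in> ball 0 1" if "n \<in> {n. n + N \<in> I}" for n using that \<alpha>_D by auto
    show "n \<le> p (n + N)" for n using p_ge[of "n+N"] by simp
    fix R :: real assume R: "R < 1"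
    have "{n \<in> {n. n + N \<in> I}. norm (\<alpha> (n + N)) \<le> R} = (\<lambda>n. n + N) -` {n\<in>I. norm (\<alpha> n) \<le> R}"
      by auto
    then show "finite {n \<in> {n. n + N \<in> I}. norm (\<alpha> (n + N)) \<le> R}"
      using finite_vimageI[OF fin[OF R], of "\<lambda>n. n + N"] by (simp add: inj_def)
  qed
  have Tg: "T.g n = g (n + N)" for n
    by (auto simp: T.g_def g_def T.w_def w_def T.\<beta>_def \<beta>_def fun_eq_iff)
  define h1 where "h1 w = (\<Prod>n\<in>{..<N} - A. g n w) * T.f w" for w
  define h2 where "h2 w = (\<Prod>n\<in>A. g n w)" for w
  have feq: "f w = h1 w * h2 w" if w: "w \<in> ball 0 1" for w
  proof -
    have "(\<lambda>n. g n w) has_prod ((\<Prod>k<N. g k w) * (\<Prod>k. g (k + N) w))"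
      by (rule has_prod_ignore_initial_segment'[OF conv[OF w]])
    then have "f w = (\<Prod>k<N. g k w) * (\<Prod>k. g (k + N) w)"
      using has_prod[OF w] has_prod_unique2 by blast
    also have "(\<Prod>k. g (k + N) w) = T.f w" by (simp add: T.f_def Tg)
    also have "{..<N} = ({..<N} - A) \<union> A" using N by auto
    also have "(\<Prod>k\<in>({..<N} - A) \<union> A. g k w) = (\<Prod>k\<in>{..<N} - A. g k w) * (\<Prod>k\<in>A. g k w)"
      by (intro prod.union_disjoint) (use fA in auto)
    finally show ?thesis by (simp add: h1_def h2_def mult_ac)
  qed
  have h1hol: "h1 holomorphic_on ball 0 1"
    unfolding h1_def by (intro holomorphic_intros g_hol T.f_hol)
  have h2hol: "h2 holomorphic_on ball 0 1"
    unfolding h2_def by (intro holomorphic_intros g_hol)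
  have h1a: "h1 analytic_on {z}" by (rule holomorphic_on_imp_analytic_at[OF h1hol open_ball z])
  have h2a: "h2 analytic_on {z}" by (rule holomorphic_on_imp_analytic_at[OF h2hol open_ball z])
  have h1nz: "h1 z \<noteq> 0"
  proof -
    have "g n z \<noteq> 0" if "n \<in> {..<N} - A" for n using g_zero[OF z, of n] that by (auto simp: A_def)
    then have "(\<Prod>n\<in>{..<N} - A. g n z) \<noteq> 0" by simp
    moreover have "T.f z \<noteq> 0"
    proof
      assume "T.f z = 0"
      then obtain n where "n + N \<in> I" "\<alpha> (n + N) = z" using T.f_zero[OF z] by auto
      then have "n + N \<in> A" by (simp add: A_def)
      then show False using N by auto
    qed
    ultimately show ?thesis by (simp add: h1_def)
  qed
  have ev: "eventually (\<lambda>w. h1 w * h2 w \<noteq> 0) (at z)"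
    using f_ev_nz[OF z] by eventually_elim (use feq in auto)
  have "zorder f z = zorder (\<lambda>w. h1 w * h2 w) z"
    by (rule zorder_cong) (use f_ev_nz[OF z] feq in \<open>auto elim: eventually_mono\<close>)
  also have "\<dots> = zorder h1 z + zorder h2 z" by (rule zorder_times_analytic[OF h1a h2a ev])
  also have "zorder h1 z = 0" by (rule zorder_eq_0I[OF h1a h1nz])
  also have "zorder h2 z = (\<Sum>n\<in>A. zorder (g n) z)"
    unfolding h2_def
  proof (rule zorder_prod_analytic)
    show "g n analytic_on {z}" if "n \<in> A" for n by (rule holomorphic_on_imp_analytic_at[OF g_hol open_ball z])
    show "eventually (\<lambda>w. (\<Prod>n\<in>A. g n w) \<noteq> 0) (at z)"
      using ev by eventually_elim (simp add: h2_def)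
  qed
  also have "(\<Sum>n\<in>A. zorder (g n) z) = (\<Sum>n\<in>A. 1)"
    by (intro sum.cong refl) (use zorder_g in \<open>auto simp: A_def\<close>)
  finally show ?thesis by (simp add: A_def)
qed

end


lemma zorder_even_local:
  fixes q :: "complex \<Rightarrow> complex"
  assumes q: "q holomorphic_on ball 0 1" and nz: "\<exists>w\<in>ball 0 1. q w \<noteq> 0"
    and aD: "\<alpha> \<in> ball 0 1"
    and J: "\<rho> > 0" "J holomorphic_on ball \<alpha> \<rho>" "\<And>z. z \<in> ball \<alpha> \<rho> \<Longrightarrow> q z = (J z)^2"
  shows "\<exists>j. zorder q \<alpha> = int (2 * j) \<and> (q \<alpha> = 0 \<longleftrightarrow> j > 0)"
proof (cases "q \<alpha> = 0")
  case False
  have "zorder q \<alpha> = 0"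
    by (rule zorder_eq_0I[OF holomorphic_on_imp_analytic_at[OF q open_ball aD] False])
  then show ?thesis using False by (intro exI[of _ 0]) simp
next
  case True
  obtain k r0 u where u: "0 < r0" "ball \<alpha> r0 \<subseteq> ball 0 1" "u holomorphic_on ball \<alpha> r0"
      "\<And>w. w \<in> ball \<alpha> r0 \<Longrightarrow> q w = (w - \<alpha>)^k * u w"
      "\<And>w. w \<in> ball \<alpha> r0 \<Longrightarrow> u w \<noteq> 0"
    by (rule local_order[OF q open_ball connected_ball aD nz]) (rule that, assumption+)
  define w0 where "w0 = \<alpha> + of_real (min \<rho> r0 / 2)"
  have w0: "w0 \<in> ball \<alpha> \<rho>" "w0 \<in> ball \<alpha> r0" "w0 \<noteq> \<alpha>"
    using J(1) u(1) by (auto simp: w0_def dist_norm)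
  have "q w0 \<noteq> 0" using u(4)[OF w0(2)] u(5)[OF w0(2)] w0(3) by simp
  then have Jw0: "J w0 \<noteq> 0" using J(3)[OF w0(1)] by auto
  obtain j r g where g: "0 < r" "ball \<alpha> r \<subseteq> ball \<alpha> \<rho>" "g holomorphic_on ball \<alpha> r"
      "\<And>w. w \<in> ball \<alpha> r \<Longrightarrow> J w = (w - \<alpha>)^j * g w"
      "\<And>w. w \<in> ball \<alpha> r \<Longrightarrow> g w \<noteq> 0"
  proof -
    have Jnz: "\<exists>w\<in>ball \<alpha> \<rho>. J w \<noteq> 0" using Jw0 w0(1) by blast
    have aB: "\<alpha> \<in> ball \<alpha> \<rho>" using J(1) by simp
    show ?thesis by (rule local_order[OF J(2) open_ball connected_ball aB Jnz]) (rule that, assumption+)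
  qed
  have "zorder q \<alpha> = int (2 * j)"
  proof (rule order_via_zorder[OF g(1)])
    show "(\<lambda>w. g w ^ 2) holomorphic_on ball \<alpha> r" using g(3) by (intro holomorphic_intros)
    show "g \<alpha> ^ 2 \<noteq> 0" using g(1,5) by simp
    fix w assume w: "w \<in> ball \<alpha> r"
    have "q w = (J w)^2" using J(3) g(2) w by auto
    also have "\<dots> = (w - \<alpha>)^(2*j) * g w ^ 2" using g(4)[OF w] by (simp add: power_mult_distrib power_mult[symmetric] mult.commute)
    finally show "q w = (w - \<alpha>)^(2*j) * g w ^ 2" .
  qed
  moreover have "j > 0"
  proof (rule ccontr)
    assume "\<not> j > 0"
    then have "j = 0" by simp
    then have "J \<alpha> = g \<alpha>" using g(4)[of \<alpha>] g(1) by simp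
    then have "J \<alpha> \<noteq> 0" using g(5)[of \<alpha>] g(1) by simp
    then show False using True J(3)[of \<alpha>] J(1) by simp
  qed
  ultimately show ?thesis using True by blast
qed

theorem sqrt_disc:
  fixes q :: "complex \<Rightarrow> complex"
  assumes q: "q holomorphic_on ball 0 1"
    and loc: "\<And>\<alpha>. \<alpha> \<in> ball 0 1 \<Longrightarrow> \<exists>\<rho>>0. \<exists>J. J holomorphic_on ball \<alpha> \<rho> \<and> (\<forall>z\<in>ball \<alpha> \<rho>. q z = (J z)^2)"
  shows "\<exists>d. d holomorphic_on ball 0 1 \<and> (\<forall>z\<in>ball 0 1. q z = (d z)^2)"
proof (cases "\<exists>w\<in>ball 0 1. q w \<noteq> 0")
  case False
  then show ?thesis by (intro exI[of _ "\<lambda>_. 0"]) auto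
next
  case True
  note nz = True
  have ev: "\<exists>j. zorder q \<alpha> = int (2 * j) \<and> (q \<alpha> = 0 \<longleftrightarrow> j > 0)" if aD: "\<alpha> \<in> ball 0 1" for \<alpha>
  proof -
    obtain \<rho> J where "\<rho> > 0" "J holomorphic_on ball \<alpha> \<rho>" "\<forall>z\<in>ball \<alpha> \<rho>. q z = (J z)^2"
      using loc[OF aD] by blast
    then show ?thesis using zorder_even_local[OF q nz aD] by blast
  qed
  define jm where "jm \<alpha> = (SOME j. zorder q \<alpha> = int (2 * j) \<and> (q \<alpha> = 0 \<longleftrightarrow> j > 0))" for \<alpha>
  have jm: "zorder q \<alpha> = int (2 * jm \<alpha>) \<and> (q \<alpha> = 0 \<longleftrightarrow> jm \<alpha> > 0)" if "\<alpha> \<in> ball 0 1" for \<alpha>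
    using someI_ex[OF ev[OF that]] by (simp add: jm_def)
  define Zq where "Zq = {z \<in> ball 0 1. q z = 0}"
  define S where "S = (SIGMA \<alpha>:Zq. {..<jm \<alpha>})"
  have cS: "countable S" unfolding S_def Zq_def using zeros_countable[OF q nz] by auto
  define idx where "idx = to_nat_on S"
  have inj: "inj_on idx S" unfolding idx_def using cS by blast
  define I where "I = idx ` S"
  define \<alpha>s where "\<alpha>s n = fst (inv_into S idx n)" for n
  have \<alpha>s_S: "(\<alpha>s n, snd (inv_into S idx n)) \<in> S" if "n \<in> I" for n
    using that inv_into_into[of n idx S] by (simp add: \<alpha>s_def I_def)
  have \<alpha>s_idx: "\<alpha>s (idx x) = fst x" if "x \<in> S" for x using that inj by (simp add: \<alpha>s_def)
  have set_eq: "{n\<in>I. \<alpha>s n \<in> X} = idx ` {x\<in>S. fst x \<in> X}" for X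
  proof
    show "{n\<in>I. \<alpha>s n \<in> X} \<subseteq> idx ` {x\<in>S. fst x \<in> X}"
    proof
      fix n assume n: "n \<in> {n\<in>I. \<alpha>s n \<in> X}"
      then have "inv_into S idx n \<in> S" "idx (inv_into S idx n) = n"
        using inv_into_into[of n idx S] f_inv_into_f[of n idx S] by (auto simp: I_def)
      then show "n \<in> idx ` {x\<in>S. fst x \<in> X}" using n by (force simp: \<alpha>s_def)
    qed
  next
    show "idx ` {x\<in>S. fst x \<in> X} \<subseteq> {n\<in>I. \<alpha>s n \<in> X}"
      using \<alpha>s_idx by (auto simp: I_def)
  qed
  interpret W: dprod \<alpha>s I "\<lambda>n. n"
  proof
    fix n assume "n \<in> I"
    then show "\<alpha>s n \<in> ball 0 1" using \<alpha>s_S[of n] by (auto simp: S_def Zq_def)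
  next
    fix R :: real assume R: "R < 1"
    have "{n\<in>I. norm (\<alpha>s n) \<le> R} = idx ` {x\<in>S. fst x \<in> cball 0 R}"
      using set_eq[of "cball 0 R"] by simp
    moreover have "{x\<in>S. fst x \<in> cball 0 R} = (SIGMA \<alpha>:{z \<in> cball 0 R. q z = 0}. {..<jm \<alpha>})"
      using R by (auto simp: S_def Zq_def)
    moreover have "finite {z \<in> cball 0 R. q z = 0}" by (rule zeros_finite[OF q nz R])
    ultimately show "finite {n\<in>I. norm (\<alpha>s n) \<le> R}" by simp
  qed simp
  have card_eq: "card {n\<in>I. \<alpha>s n = z} = jm z" if z: "z \<in> ball 0 1" for z
  proof -
    have "{n\<in>I. \<alpha>s n = z} = idx ` {x\<in>S. fst x \<in> {z}}" using set_eq[of "{z}"] by simp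
    moreover have "card (idx ` {x\<in>S. fst x \<in> {z}}) = card {x\<in>S. fst x \<in> {z}}"
      by (rule card_image) (rule inj_on_subset[OF inj], auto)
    moreover have "{x\<in>S. fst x \<in> {z}} = (if q z = 0 then {z} \<times> {..<jm z} else {})"
      using z by (auto simp: S_def Zq_def)
    ultimately show ?thesis using jm[OF z] by (auto simp: card_cartesian_product)
  qed
  define W2 where "W2 z = W.f z ^ 2" for z
  have W2hol: "W2 holomorphic_on ball 0 1" unfolding W2_def by (intro holomorphic_intros W.f_hol)
  have W2zero: "W2 z = 0 \<longleftrightarrow> q z = 0" if z: "z \<in> ball 0 1" for z
  proof -
    have "W2 z = 0 \<longleftrightarrow> (\<exists>n\<in>I. \<alpha>s n = z)" using W.f_zero[OF z] by (simp add: W2_def)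
    also have "\<dots> \<longleftrightarrow> {n\<in>I. \<alpha>s n = z} \<noteq> {}" by blast
    also have "\<dots> \<longleftrightarrow> card {n\<in>I. \<alpha>s n = z} \<noteq> 0"
    proof -
      have sub: "{n\<in>I. \<alpha>s n = z} \<subseteq> {n\<in>I. norm (\<alpha>s n) \<le> norm z}" by auto
      have "finite {n\<in>I. norm (\<alpha>s n) \<le> norm z}" using W.fin[of "norm z"] z by simp
      then have "finite {n\<in>I. \<alpha>s n = z}" using sub finite_subset by blast
      then show ?thesis by auto
    qed
    also have "\<dots> \<longleftrightarrow> q z = 0" using card_eq[OF z] jm[OF z] by auto
    finally show ?thesis .
  qed
  have W2ord: "zorder W2 z = zorder q z" if z: "z \<in> ball 0 1" for z
  proof -
    have an: "W.f analytic_on {z}" by (rule holomorphic_on_imp_analytic_at[OF W.f_hol open_ball z])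
    have fr: "frequently (\<lambda>w. W.f w \<noteq> 0) (at z)"
      using eventually_frequently[OF _ W.f_ev_nz[OF z]] by (auto elim: frequently_elim1)
    have "zorder W2 z = 2 * zorder W.f z"
      unfolding W2_def using zorder_power[OF analytic_on_imp_meromorphic_on[OF an] fr, of 2] by simp
    also have "\<dots> = int (2 * jm z)" using W.zorder_f[OF z] card_eq[OF z] by simp
    also have "\<dots> = zorder q z" using jm[OF z] by simp
    finally show ?thesis .
  qed
  obtain h where h: "h holomorphic_on ball 0 1" "\<And>z. z \<in> ball 0 1 \<Longrightarrow> h z \<noteq> 0"
      "\<And>z. z \<in> ball 0 1 \<Longrightarrow> q z = h z * W2 z"
    by (rule holomorphic_zorder_factorization[OF q open_ball connected_ball W2hol W2zero W2ord]) auto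
  obtain s where s: "s holomorphic_on ball 0 1" "\<And>z. z \<in> ball 0 1 \<Longrightarrow> h z = s z ^ 2"
    using contractible_imp_holomorphic_sqrt[OF h(1) convex_imp_contractible[OF convex_ball] h(2)] by blast
  show ?thesis
  proof (intro exI conjI ballI)
    show "(\<lambda>z. s z * W.f z) holomorphic_on ball 0 1" by (intro holomorphic_intros s(1) W.f_hol)
    fix z :: complex assume z: "z \<in> ball 0 1"
    show "q z = (s z * W.f z)^2" using h(3)[OF z] s(2)[OF z] by (simp add: W2_def power_mult_distrib)
  qed
qed


lemma ord_unique2:
  assumes "r > 0" "g holomorphic_on ball \<alpha> r" "g \<alpha> \<noteq> 0" "\<And>w. w \<in> ball \<alpha> r \<Longrightarrow> f w = (w-\<alpha>)^m * g w"
    and "r' > 0" "h holomorphic_on ball \<alpha> r'" "h \<alpha> \<noteq> 0" "\<And>w. w \<in> ball \<alpha> r' \<Longrightarrow> f w = (w-\<alpha>)^n * h w"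
  shows "m = n"
proof -
  have "zorder f \<alpha> = int m" by (rule order_via_zorder[OF assms(1-4)])
  moreover have "zorder f \<alpha> = int n" by (rule order_via_zorder[OF assms(5-8)])
  ultimately show ?thesis by simp
qed

lemma not_ge_succ:
  fixes q u :: "complex \<Rightarrow> complex"
  assumes aD: "\<alpha> \<in> ball 0 1" and r: "r > 0" "ball \<alpha> r \<subseteq> ball 0 1"
    and u: "u holomorphic_on ball \<alpha> r" "\<And>w. w \<in> ball \<alpha> r \<Longrightarrow> u w \<noteq> 0"
    and eq: "\<And>w. w \<in> ball \<alpha> r \<Longrightarrow> q w = (w-\<alpha>)^k * u w"
  shows "\<not> zero_mult_ge q \<alpha> (Suc k)"
proof
  assume "zero_mult_ge q \<alpha> (Suc k)"
  then obtain G where G: "G holomorphic_on ball 0 1" "\<And>z. z \<in> ball 0 1 \<Longrightarrow> q z = (z-\<alpha>)^(Suc k) * G z"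
    unfolding zero_mult_ge_def by blast
  define w0 where "w0 = \<alpha> + of_real (r / 2)"
  have w0: "w0 \<in> ball \<alpha> r" "w0 \<noteq> \<alpha>" using r by (auto simp: w0_def dist_norm)
  have "q w0 \<noteq> 0" using eq[OF w0(1)] u(2)[OF w0(1)] w0(2) by simp
  then have "G w0 \<noteq> 0" using G(2)[of w0] w0(1) r(2) by auto
  then have Gnz: "\<exists>w\<in>ball 0 1. G w \<noteq> 0" using w0(1) r(2) by blast
  obtain j r' g where g: "0 < r'" "ball \<alpha> r' \<subseteq> ball 0 1" "g holomorphic_on ball \<alpha> r'"
      "\<And>w. w \<in> ball \<alpha> r' \<Longrightarrow> G w = (w - \<alpha>)^j * g w"
      "\<And>w. w \<in> ball \<alpha> r' \<Longrightarrow> g w \<noteq> 0"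
    by (rule local_order[OF G(1) open_ball connected_ball aD Gnz]) (rule that, assumption+)
  have "k = Suc k + j"
  proof (rule ord_unique2[OF r(1) u(1) u(2) eq g(1) g(3) g(5)])
    show "\<alpha> \<in> ball \<alpha> r" using r by simp
    show "\<alpha> \<in> ball \<alpha> r'" using g(1) by simp
    fix w assume w: "w \<in> ball \<alpha> r'"
    then show "q w = (w - \<alpha>)^(Suc k + j) * g w"
      using G(2)[of w] g(2,4) by (auto simp: power_add)
  qed
  then show False by simp
qed

lemma even_if_square:
  fixes d u :: "complex \<Rightarrow> complex"
  assumes d: "d holomorphic_on ball 0 1" and u: "u holomorphic_on ball 0 1" and aD: "\<alpha> \<in> ball 0 1"
    and u0: "u \<alpha> \<noteq> 0" and eq: "\<And>z. z \<in> ball 0 1 \<Longrightarrow> (d z)^2 = (z-\<alpha>)^n * u z"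
  shows "even n"
proof -
  obtain \<rho> where \<rho>: "\<rho> > 0" "ball \<alpha> \<rho> \<subseteq> ball 0 1" "\<And>w. w \<in> ball \<alpha> \<rho> \<Longrightarrow> u w \<noteq> 0"
    using eventually_nz_ball[OF holomorphic_on_imp_continuous_on[OF u] open_ball aD u0] by blast
  define w0 where "w0 = \<alpha> + of_real (\<rho> / 2)"
  have w0: "w0 \<in> ball \<alpha> \<rho>" "w0 \<noteq> \<alpha>" using \<rho> by (auto simp: w0_def dist_norm)
  have "d w0 \<noteq> 0" using eq[of w0] \<rho>(2,3) w0 by auto
  then have dnz: "\<exists>w\<in>ball 0 1. d w \<noteq> 0" using w0(1) \<rho>(2) by blast
  obtain j r g where g: "0 < r" "ball \<alpha> r \<subseteq> ball 0 1" "g holomorphic_on ball \<alpha> r"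
      "\<And>w. w \<in> ball \<alpha> r \<Longrightarrow> d w = (w - \<alpha>)^j * g w"
      "\<And>w. w \<in> ball \<alpha> r \<Longrightarrow> g w \<noteq> 0"
    by (rule local_order[OF d open_ball connected_ball aD dnz]) (rule that, assumption+)
  have "n = 2 * j"
  proof (rule ord_unique2[of \<rho> "u" \<alpha> "\<lambda>w. (d w)^2" n r "\<lambda>w. (g w)^2" "2*j"])
    show "u holomorphic_on ball \<alpha> \<rho>" using u \<rho>(2) by (rule holomorphic_on_subset)
    show "(\<lambda>w. (g w)^2) holomorphic_on ball \<alpha> r" using g(3) by (intro holomorphic_intros)
    show "(g \<alpha>)^2 \<noteq> 0" using g(1,5) by simp
    fix w assume "w \<in> ball \<alpha> r"
    then show "(d w)^2 = (w - \<alpha>)^(2*j) * (g w)^2"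
      using g(4) by (simp add: power_mult_distrib power_mult[symmetric] mult.commute)
  qed (use \<rho> g u0 eq in auto)
  then show ?thesis by simp
qed


lemma vanish_factor:
  fixes G :: "complex \<Rightarrow> complex"
  assumes G: "G holomorphic_on ball 0 1" and aD: "\<alpha> \<in> ball 0 1" and G0: "G \<alpha> = 0"
  shows "\<exists>G'. G' holomorphic_on ball 0 1 \<and> (\<forall>z\<in>ball 0 1. G z = (z-\<alpha>)^1 * G' z)"
proof (cases "\<exists>w\<in>ball 0 1. G w \<noteq> 0")
  case False
  then show ?thesis by (intro exI[of _ "\<lambda>_. 0"]) auto
next
  case True
  obtain j r g where g: "0 < r" "ball \<alpha> r \<subseteq> ball 0 1" "g holomorphic_on ball \<alpha> r"
      "\<And>w. w \<in> ball \<alpha> r \<Longrightarrow> G w = (w - \<alpha>)^j * g w"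
      "\<And>w. w \<in> ball \<alpha> r \<Longrightarrow> g w \<noteq> 0"
    by (rule local_order[OF G open_ball connected_ball aD True]) (rule that, assumption+)
  have "j \<noteq> 0"
  proof
    assume "j = 0"
    then have "G \<alpha> = g \<alpha>" using g(4)[of \<alpha>] g(1) by simp
    then show False using G0 g(5)[of \<alpha>] g(1) by simp
  qed
  then have eq: "G w = (w - \<alpha>)^1 * ((w - \<alpha>)^(j - 1) * g w)" if "w \<in> ball \<alpha> r" for w
    using g(4)[OF that] by (cases j) auto
  have h: "(\<lambda>w. (w - \<alpha>)^(j-1) * g w) holomorphic_on ball \<alpha> r" using g(3) by (intro holomorphic_intros)
  obtain G' where "G' holomorphic_on ball 0 1" "\<forall>z\<in>ball 0 1. G z = (z-\<alpha>)^1 * G' z"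
    using glob_factor[OF open_ball G g(1,2) h eq] by blast
  then show ?thesis by blast
qed

lemma mk_matrix:
  fixes h11 h12 h21 h22 :: "complex \<Rightarrow> complex"
  assumes "h11 holomorphic_on S" "h12 holomorphic_on S" "h21 holomorphic_on S" "h22 holomorphic_on S"
  shows "\<exists>H :: complex \<Rightarrow> complex^2^2. (\<forall>i j. (\<lambda>z. H z $ i $ j) holomorphic_on S) \<and>
     (\<forall>z\<in>S. piMap (H z) = (h21 z, h11 z + h22 z, h11 z * h22 z - h12 z * h21 z))"
proof -
  define H :: "complex \<Rightarrow> complex^2^2" where
    "H z = (\<chi> i j. if i = 1 then (if j = 1 then h11 z else h12 z) else (if j = 1 then h21 z else h22 z))" for z
  have e: "H z $ 1 $ 1 = h11 z" "H z $ 1 $ 2 = h12 z" "H z $ 2 $ 1 = h21 z" "H z $ 2 $ 2 = h22 z" for z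
    by (simp_all add: H_def)
  have "(\<lambda>z. H z $ i $ j) holomorphic_on S" for i j :: 2
    using exhaust_2[of i] exhaust_2[of j] assms by (auto simp: e)
  moreover have "piMap (H z) = (h21 z, h11 z + h22 z, h11 z * h22 z - h12 z * h21 z)" for z
    by (simp add: piMap_def det_2 e)
  ultimately show ?thesis by blast
qed

lemma jets:
  fixes a q :: "complex \<Rightarrow> complex"
  assumes a: "a holomorphic_on ball 0 1" and anz: "\<exists>w\<in>ball 0 1. a w \<noteq> 0"
    and q: "q holomorphic_on ball 0 1" and aD: "\<alpha> \<in> ball 0 1" and a0: "a \<alpha> = 0"
    and hyp: "\<not> (\<exists>n. odd n \<and> zero_mult_eq q \<alpha> n \<and> zero_mult_ge a \<alpha> (Suc n))"
  shows "\<exists>\<rho>>0. \<exists>J v. J holomorphic_on ball \<alpha> \<rho> \<and> v holomorphic_on ball \<alpha> \<rho> \<and>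
      (\<forall>z\<in>ball \<alpha> \<rho>. q z - (J z)^2 = a z * v z)"
proof -
  obtain m rA A where A: "0 < rA" "ball \<alpha> rA \<subseteq> ball 0 1" "A holomorphic_on ball \<alpha> rA"
      "\<And>w. w \<in> ball \<alpha> rA \<Longrightarrow> a w = (w - \<alpha>)^m * A w"
      "\<And>w. w \<in> ball \<alpha> rA \<Longrightarrow> A w \<noteq> 0"
    by (rule local_order[OF a open_ball connected_ball aD anz]) (rule that, assumption+)
  show ?thesis
  proof (cases "\<exists>w\<in>ball 0 1. q w \<noteq> 0")
    case False
    then have eq0: "\<forall>z\<in>ball \<alpha> rA. q z - ((\<lambda>_. 0) z)^2 = a z * (\<lambda>_. 0) z" using A(2) by auto
    have z0: "(\<lambda>_. 0::complex) holomorphic_on ball \<alpha> rA" by simp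
    show ?thesis using A(1) z0 eq0 by blast
  next
    case True
    obtain k rq u where u: "0 < rq" "ball \<alpha> rq \<subseteq> ball 0 1" "u holomorphic_on ball \<alpha> rq"
        "\<And>w. w \<in> ball \<alpha> rq \<Longrightarrow> q w = (w - \<alpha>)^k * u w"
        "\<And>w. w \<in> ball \<alpha> rq \<Longrightarrow> u w \<noteq> 0"
      by (rule local_order[OF q open_ball connected_ball aD True]) (rule that, assumption+)
    define \<rho> where "\<rho> = min rA rq"
    have \<rho>: "\<rho> > 0" "ball \<alpha> \<rho> \<subseteq> ball \<alpha> rA" "ball \<alpha> \<rho> \<subseteq> ball \<alpha> rq"
      using A(1) u(1) by (auto simp: \<rho>_def)
    show ?thesis
    proof (cases "m \<le> k")
      case True
      define v where "v z = (z-\<alpha>)^(k-m) * u z / A z" for z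
      have vh: "v holomorphic_on ball \<alpha> \<rho>"
        unfolding v_def using \<rho> A(5) 
        by (intro holomorphic_intros holomorphic_on_subset[OF u(3)] holomorphic_on_subset[OF A(3)]) auto
      have eqv: "q z - ((\<lambda>_. 0) z)^2 = a z * v z" if z: "z \<in> ball \<alpha> \<rho>" for z
      proof -
        have zA: "z \<in> ball \<alpha> rA" and zq: "z \<in> ball \<alpha> rq" using z \<rho> by auto
        have "a z * v z = (z-\<alpha>)^m * (z-\<alpha>)^(k-m) * u z" using A(4)[OF zA] A(5)[OF zA] by (simp add: v_def)
        also have "\<dots> = (z-\<alpha>)^k * u z" using True by (simp add: power_add[symmetric])
        finally show ?thesis using u(4)[OF zq] by simp
      qed
      have z0: "(\<lambda>_. 0::complex) holomorphic_on ball \<alpha> \<rho>" by simp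
      show ?thesis using \<rho>(1) vh z0 eqv by blast
    next
      case False
      have "even k"
      proof (rule ccontr)
        assume ok: "odd k"
        have "zero_mult_ge q \<alpha> k"
          unfolding zero_mult_ge_def using glob_factor[OF open_ball q u(1,2,3,4)] by blast
        moreover have "\<not> zero_mult_ge q \<alpha> (Suc k)" by (rule not_ge_succ[OF aD u(1,2,3,5,4)])
        moreover have "zero_mult_ge a \<alpha> (Suc k)"
        proof -
          obtain A' where A': "A' holomorphic_on ball 0 1" "\<forall>z\<in>ball 0 1. a z = (z-\<alpha>)^m * A' z"
            using glob_factor[OF open_ball a A(1,2,3,4)] by blast
          have sk: "Suc k \<le> m" using False by simp
          have "a z = (z-\<alpha>)^(Suc k) * ((z-\<alpha>)^(m - Suc k) * A' z)" if "z \<in> ball 0 1" for z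
          proof -
            have pw: "(z-\<alpha>)^m = (z-\<alpha>)^(Suc k) * (z-\<alpha>)^(m - Suc k)"
              using sk by (metis le_add_diff_inverse power_add)
            have "a z = (z-\<alpha>)^m * A' z" using A'(2) that by simp
            also have "\<dots> = (z-\<alpha>)^(Suc k) * (z-\<alpha>)^(m - Suc k) * A' z" by (simp only: pw)
            finally show ?thesis by (simp only: mult.assoc)
          qed
          then show ?thesis unfolding zero_mult_ge_def using A'(1) by (intro exI[of _ "\<lambda>z. (z-\<alpha>)^(m - Suc k) * A' z"]) (auto intro!: holomorphic_intros)
        qed
        ultimately show False using hyp ok by (auto simp: zero_mult_eq_def)
      qed
      obtain sq where sq: "sq holomorphic_on ball \<alpha> rq" "\<And>z. z \<in> ball \<alpha> rq \<Longrightarrow> u z = sq z ^ 2"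
        using contractible_imp_holomorphic_sqrt[OF u(3) convex_imp_contractible[OF convex_ball] u(5)] by blast
      define J where "J z = (z-\<alpha>)^(k div 2) * sq z" for z
      have Jh: "J holomorphic_on ball \<alpha> rq" unfolding J_def by (intro holomorphic_intros sq(1))
      have eqJ: "q z - (J z)^2 = a z * (\<lambda>_. 0) z" if z: "z \<in> ball \<alpha> rq" for z
      proof -
        have "(J z)^2 = (z-\<alpha>)^(2 * (k div 2)) * (sq z)^2"
          by (simp add: J_def power_mult_distrib power_mult[symmetric] mult.commute)
        also have "2 * (k div 2) = k" using \<open>even k\<close> by simp
        finally show ?thesis using u(4)[OF z] sq(2)[OF z] by simp
      qed
      have z0: "(\<lambda>_. 0::complex) holomorphic_on ball \<alpha> rq" by simp
      show ?thesis using u(1) Jh z0 eqJ by blast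
    qed
  qed
qed


lemma local_sqrt:
  fixes q :: "complex \<Rightarrow> complex"
  assumes q: "q holomorphic_on ball 0 1" and aD: "\<alpha> \<in> ball 0 1"
    and hyp: "\<And>k. odd k \<Longrightarrow> \<not> zero_mult_eq q \<alpha> k"
  shows "\<exists>\<rho>>0. \<exists>J. J holomorphic_on ball \<alpha> \<rho> \<and> (\<forall>z\<in>ball \<alpha> \<rho>. q z = (J z)^2)"
proof (cases "\<exists>w\<in>ball 0 1. q w \<noteq> 0")
  case False
  have "\<forall>z\<in>ball \<alpha> (1 - norm \<alpha>). q z = ((\<lambda>_. 0) z)^2"
  proof
    fix z assume "z \<in> ball \<alpha> (1 - norm \<alpha>)"
    then have "norm z < 1" using norm_triangle_sub[of z \<alpha>] by (simp add: dist_norm norm_minus_commute)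
    then show "q z = ((\<lambda>_. 0) z)^2" using False by auto
  qed
  moreover have "(\<lambda>_. 0::complex) holomorphic_on ball \<alpha> (1 - norm \<alpha>)" by simp
  moreover have "1 - norm \<alpha> > 0" using aD by simp
  ultimately show ?thesis by blast
next
  case True
  obtain k rq u where u: "0 < rq" "ball \<alpha> rq \<subseteq> ball 0 1" "u holomorphic_on ball \<alpha> rq"
      "\<And>w. w \<in> ball \<alpha> rq \<Longrightarrow> q w = (w - \<alpha>)^k * u w"
      "\<And>w. w \<in> ball \<alpha> rq \<Longrightarrow> u w \<noteq> 0"
    by (rule local_order[OF q open_ball connected_ball aD True]) (rule that, assumption+)
  have "even k"
  proof (rule ccontr)
    assume ok: "odd k"
    have "zero_mult_ge q \<alpha> k"
      unfolding zero_mult_ge_def using glob_factor[OF open_ball q u(1,2,3,4)] by blast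
    moreover have "\<not> zero_mult_ge q \<alpha> (Suc k)" by (rule not_ge_succ[OF aD u(1,2,3,5,4)])
    ultimately show False using hyp[OF ok] by (simp add: zero_mult_eq_def)
  qed
  obtain sq where sq: "sq holomorphic_on ball \<alpha> rq" "\<And>z. z \<in> ball \<alpha> rq \<Longrightarrow> u z = sq z ^ 2"
    using contractible_imp_holomorphic_sqrt[OF u(3) convex_imp_contractible[OF convex_ball] u(5)] by blast
  define J where "J z = (z-\<alpha>)^(k div 2) * sq z" for z
  have Jh: "J holomorphic_on ball \<alpha> rq" unfolding J_def by (intro holomorphic_intros sq(1))
  have eqJ: "\<forall>z\<in>ball \<alpha> rq. q z = (J z)^2"
  proof
    fix z assume z: "z \<in> ball \<alpha> rq"
    have "(J z)^2 = (z-\<alpha>)^(2 * (k div 2)) * (sq z)^2"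
      by (simp add: J_def power_mult_distrib power_mult[symmetric] mult.commute)
    also have "2 * (k div 2) = k" using \<open>even k\<close> by simp
    finally show "q z = (J z)^2" using u(4)[OF z] sq(2)[OF z] by simp
  qed
  show ?thesis using u(1) Jh eqJ by blast
qed

theorem proposition12p4:
  fixes a s p :: "complex \<Rightarrow> complex"
  assumes "a holomorphic_on ball 0 1" "s holomorphic_on ball 0 1" "p holomorphic_on ball 0 1"
    and "\<forall>z\<in>ball 0 1. (a z, s z, p z) \<in> closure Pent"
  shows "(\<exists>H :: complex \<Rightarrow> complex^2^2.
            (\<forall>i j. (\<lambda>z. H z $ i $ j) holomorphic_on ball 0 1) \<and>
            (\<forall>z\<in>ball 0 1. piMap (H z) = (a z, s z, p z)))
     \<longleftrightarrow> \<not> (\<exists>\<alpha>\<in>ball 0 1. \<exists>n::nat. odd n \<and>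
            zero_mult_eq (\<lambda>z. s z ^ 2 / 4 - p z) \<alpha> n \<and>
            zero_mult_ge a \<alpha> (Suc n))"
proof -
  note a = assms(1) and sh = assms(2) and ph = assms(3)
  define q where "q = (\<lambda>z. s z ^ 2 / 4 - p z)"
  have qh: "q holomorphic_on ball 0 1" unfolding q_def using sh ph by (intro holomorphic_intros) auto
  have "(\<exists>H :: complex \<Rightarrow> complex^2^2.
            (\<forall>i j. (\<lambda>z. H z $ i $ j) holomorphic_on ball 0 1) \<and>
            (\<forall>z\<in>ball 0 1. piMap (H z) = (a z, s z, p z)))
     \<longleftrightarrow> \<not> (\<exists>\<alpha>\<in>ball 0 1. \<exists>n::nat. odd n \<and> zero_mult_eq q \<alpha> n \<and> zero_mult_ge a \<alpha> (Suc n))"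
  proof
    assume "\<exists>H :: complex \<Rightarrow> complex^2^2.
            (\<forall>i j. (\<lambda>z. H z $ i $ j) holomorphic_on ball 0 1) \<and>
            (\<forall>z\<in>ball 0 1. piMap (H z) = (a z, s z, p z))"
    then obtain H :: "complex \<Rightarrow> complex^2^2" where
      Hh: "\<And>i j. (\<lambda>z. H z $ i $ j) holomorphic_on ball 0 1" and
      Hp: "\<And>z. z \<in> ball 0 1 \<Longrightarrow> piMap (H z) = (a z, s z, p z)" by blast
    show "\<not> (\<exists>\<alpha>\<in>ball 0 1. \<exists>n::nat. odd n \<and> zero_mult_eq q \<alpha> n \<and> zero_mult_ge a \<alpha> (Suc n))"
    proof
      assume "\<exists>\<alpha>\<in>ball 0 1. \<exists>n::nat. odd n \<and> zero_mult_eq q \<alpha> n \<and> zero_mult_ge a \<alpha> (Suc n)"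
      then obtain \<alpha> n where aD: "\<alpha> \<in> ball 0 1" and on: "odd n" and qe: "zero_mult_eq q \<alpha> n"
        and ag: "zero_mult_ge a \<alpha> (Suc n)" by blast
      obtain G where G: "G holomorphic_on ball 0 1" "\<And>z. z \<in> ball 0 1 \<Longrightarrow> q z = (z-\<alpha>)^n * G z"
        using qe unfolding zero_mult_eq_def zero_mult_ge_def by blast
      have G0: "G \<alpha> \<noteq> 0"
      proof
        assume "G \<alpha> = 0"
        then obtain G' where G': "G' holomorphic_on ball 0 1" "\<forall>z\<in>ball 0 1. G z = (z-\<alpha>)^1 * G' z"
          using vanish_factor[OF G(1) aD] by blast
        have "\<forall>z\<in>ball 0 1. q z = (z-\<alpha>)^(Suc n) * G' z"
          using G(2) G'(2) by (simp add: mult_ac)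
        then have "zero_mult_ge q \<alpha> (Suc n)" unfolding zero_mult_ge_def using G'(1) by blast
        then show False using qe by (simp add: zero_mult_eq_def)
      qed
      obtain A' where A': "A' holomorphic_on ball 0 1" "\<And>z. z \<in> ball 0 1 \<Longrightarrow> a z = (z-\<alpha>)^(Suc n) * A' z"
        using ag unfolding zero_mult_ge_def by blast
      define dd where "dd z = (H z $ 1 $ 1 - H z $ 2 $ 2) / 2" for z
      define b where "b z = H z $ 1 $ 2" for z
      define u where "u z = G z - (z - \<alpha>) * A' z * b z" for z
      have ddh: "dd holomorphic_on ball 0 1" unfolding dd_def by (intro holomorphic_intros Hh) auto
      have uh: "u holomorphic_on ball 0 1" unfolding u_def b_def by (intro holomorphic_intros Hh A'(1) G(1))
      have u0: "u \<alpha> \<noteq> 0" using G0 by (simp add: u_def)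
      have eq: "(dd z)^2 = (z-\<alpha>)^n * u z" if z: "z \<in> ball 0 1" for z
      proof -
        have e: "a z = H z $ 2 $ 1" "s z = H z $ 1 $ 1 + H z $ 2 $ 2"
             "p z = H z $ 1 $ 1 * H z $ 2 $ 2 - H z $ 1 $ 2 * H z $ 2 $ 1"
          using Hp[OF z] by (auto simp: piMap_def det_2)
        have "(dd z)^2 = q z - a z * b z"
          unfolding dd_def b_def q_def e by (simp add: field_simps power2_eq_square)
        also have "\<dots> = (z-\<alpha>)^n * u z"
          unfolding G(2)[OF z] A'(2)[OF z] u_def by (simp add: algebra_simps)
        finally show ?thesis .
      qed
      have "even n" by (rule even_if_square[OF ddh uh aD u0 eq])
      then show False using on by simp
    qed
  next
    assume hyp: "\<not> (\<exists>\<alpha>\<in>ball 0 1. \<exists>n::nat. odd n \<and> zero_mult_eq q \<alpha> n \<and> zero_mult_ge a \<alpha> (Suc n))"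
    show "\<exists>H :: complex \<Rightarrow> complex^2^2.
            (\<forall>i j. (\<lambda>z. H z $ i $ j) holomorphic_on ball 0 1) \<and>
            (\<forall>z\<in>ball 0 1. piMap (H z) = (a z, s z, p z))"
    proof (cases "\<exists>w\<in>ball 0 1. a w \<noteq> 0")
      case False
      have "\<exists>\<rho>>0. \<exists>J. J holomorphic_on ball \<alpha> \<rho> \<and> (\<forall>z\<in>ball \<alpha> \<rho>. q z = (J z)^2)"
        if aD: "\<alpha> \<in> ball 0 1" for \<alpha>
      proof (rule local_sqrt[OF qh aD])
        fix k :: nat assume ok: "odd k"
        have "zero_mult_ge a \<alpha> (Suc k)" unfolding zero_mult_ge_def using False
          by (intro exI[of _ "\<lambda>_. 0"]) auto
        then show "\<not> zero_mult_eq q \<alpha> k" using hyp aD ok by blast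
      qed
      then obtain dd where dd: "dd holomorphic_on ball 0 1" "\<And>z. z \<in> ball 0 1 \<Longrightarrow> q z = (dd z)^2"
        using sqrt_disc[OF qh] by blast
      have h1: "(\<lambda>z. s z / 2 + dd z) holomorphic_on ball 0 1" by (intro holomorphic_intros sh dd(1)) auto
      have h2: "(\<lambda>z. s z / 2 - dd z) holomorphic_on ball 0 1" by (intro holomorphic_intros sh dd(1)) auto
      have h0: "(\<lambda>_. 0::complex) holomorphic_on ball 0 1" by simp
      obtain H :: "complex \<Rightarrow> complex^2^2" where HH: "(\<forall>i j. (\<lambda>z. H z $ i $ j) holomorphic_on ball 0 1) \<and>
        (\<forall>z\<in>ball 0 1. piMap (H z) = (a z, (s z / 2 + dd z) + (s z / 2 - dd z),
             (s z / 2 + dd z) * (s z / 2 - dd z) - 0 * a z))"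
        using mk_matrix[OF h1 h0 a h2] by (rule exE)
      note H = HH[THEN conjunct1] HH[THEN conjunct2]
      have "piMap (H z) = (a z, s z, p z)" if z: "z \<in> ball 0 1" for z
      proof -
        have "(s z / 2 + dd z) * (s z / 2 - dd z) - 0 * a z = p z"
          using dd(2)[OF z] by (simp add: q_def field_simps power2_eq_square)
        then show ?thesis using H(2) z by simp
      qed
      then show ?thesis using H(1) by blast
    next
      case True
      note anz = True
      define Zs where "Zs = {\<alpha>\<in>ball 0 1. a \<alpha> = 0}"
      have "\<forall>\<alpha>\<in>Zs. \<exists>t. fst t > 0 \<and> fst (snd t) holomorphic_on ball \<alpha> (fst t) \<and>
           snd (snd t) holomorphic_on ball \<alpha> (fst t) \<and>
           (\<forall>z\<in>ball \<alpha> (fst t). q z - (fst (snd t) z)^2 = a z * snd (snd t) z)"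
      proof
        fix \<alpha> assume "\<alpha> \<in> Zs"
        then have aD: "\<alpha> \<in> ball 0 1" and a0: "a \<alpha> = 0" by (auto simp: Zs_def)
        have "\<not> (\<exists>n. odd n \<and> zero_mult_eq q \<alpha> n \<and> zero_mult_ge a \<alpha> (Suc n))" using hyp aD by blast
        from jets[OF a anz qh aD a0 this] obtain \<rho> J v where
          "\<rho> > 0" "J holomorphic_on ball \<alpha> \<rho>" "v holomorphic_on ball \<alpha> \<rho>"
          "\<forall>z\<in>ball \<alpha> \<rho>. q z - (J z)^2 = a z * v z" by blast
        then show "\<exists>t. fst t > 0 \<and> fst (snd t) holomorphic_on ball \<alpha> (fst t) \<and>
           snd (snd t) holomorphic_on ball \<alpha> (fst t) \<and>
           (\<forall>z\<in>ball \<alpha> (fst t). q z - (fst (snd t) z)^2 = a z * snd (snd t) z)"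
          by (intro exI[of _ "(\<rho>, J, v)"]) simp
      qed
      then have "\<exists>T. \<forall>\<alpha>\<in>Zs. fst (T \<alpha>) > 0 \<and> fst (snd (T \<alpha>)) holomorphic_on ball \<alpha> (fst (T \<alpha>)) \<and>
           snd (snd (T \<alpha>)) holomorphic_on ball \<alpha> (fst (T \<alpha>)) \<and>
           (\<forall>z\<in>ball \<alpha> (fst (T \<alpha>)). q z - (fst (snd (T \<alpha>)) z)^2 = a z * snd (snd (T \<alpha>)) z)"
        by (rule bchoice)
      then obtain T where T: "\<forall>\<alpha>\<in>Zs. fst (T \<alpha>) > 0 \<and> fst (snd (T \<alpha>)) holomorphic_on ball \<alpha> (fst (T \<alpha>)) \<and>
           snd (snd (T \<alpha>)) holomorphic_on ball \<alpha> (fst (T \<alpha>)) \<and>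
           (\<forall>z\<in>ball \<alpha> (fst (T \<alpha>)). q z - (fst (snd (T \<alpha>)) z)^2 = a z * snd (snd (T \<alpha>)) z)"
        by (rule exE)
      define \<rho>J where "\<rho>J \<alpha> = fst (T \<alpha>)" for \<alpha>
      define J where "J \<alpha> = fst (snd (T \<alpha>))" for \<alpha>
      define v where "v \<alpha> = snd (snd (T \<alpha>))" for \<alpha>
      have Jp: "\<rho>J \<alpha> > 0" "J \<alpha> holomorphic_on ball \<alpha> (\<rho>J \<alpha>)" "v \<alpha> holomorphic_on ball \<alpha> (\<rho>J \<alpha>)"
          "\<And>z. z \<in> ball \<alpha> (\<rho>J \<alpha>) \<Longrightarrow> q z - (J \<alpha> z)^2 = a z * v \<alpha> z"
        if "\<alpha> \<in> ball 0 1" "a \<alpha> = 0" for \<alpha>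
      proof -
        have "\<alpha> \<in> Zs" using that by (simp add: Zs_def)
        then show "\<rho>J \<alpha> > 0" "J \<alpha> holomorphic_on ball \<alpha> (\<rho>J \<alpha>)" "v \<alpha> holomorphic_on ball \<alpha> (\<rho>J \<alpha>)"
          "\<And>z. z \<in> ball \<alpha> (\<rho>J \<alpha>) \<Longrightarrow> q z - (J \<alpha> z)^2 = a z * v \<alpha> z"
          using bspec[OF T] unfolding \<rho>J_def J_def v_def by auto
      qed
      obtain d where d: "d holomorphic_on ball 0 1"
        "\<forall>\<alpha>\<in>ball 0 1. a \<alpha> = 0 \<longrightarrow> (\<exists>\<rho>>0. \<exists>w. w holomorphic_on ball \<alpha> \<rho> \<and> (\<forall>z\<in>ball \<alpha> \<rho>. d z - J \<alpha> z = a z * w z))"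
        using interpolation_disc[of a \<rho>J J] a anz Jp(1,2) by blast
      have "\<exists>b. b holomorphic_on ball 0 1 \<and> (\<forall>z\<in>ball 0 1. q z - (d z)^2 = a z * b z)"
      proof (rule global_div[OF open_ball connected_ball a _ anz])
        show "(\<lambda>z. q z - (d z)^2) holomorphic_on ball 0 1" by (intro holomorphic_intros qh d(1))
        fix \<alpha> assume aD: "\<alpha> \<in> ball 0 1" and a0: "a \<alpha> = 0"
        obtain \<rho>1 w where w: "\<rho>1 > 0" "w holomorphic_on ball \<alpha> \<rho>1" "\<And>z. z \<in> ball \<alpha> \<rho>1 \<Longrightarrow> d z - J \<alpha> z = a z * w z"
          using d(2) aD a0 by blast
        define \<rho> where "\<rho> = min (min \<rho>1 (\<rho>J \<alpha>)) (1 - norm \<alpha>)"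
        have \<rho>: "\<rho> > 0" "ball \<alpha> \<rho> \<subseteq> ball \<alpha> \<rho>1" "ball \<alpha> \<rho> \<subseteq> ball \<alpha> (\<rho>J \<alpha>)"
          using w(1) Jp(1)[OF aD a0] aD by (auto simp: \<rho>_def)
        have sub: "ball \<alpha> \<rho> \<subseteq> ball 0 1"
        proof
          fix z assume z: "z \<in> ball \<alpha> \<rho>"
          then have "norm (z - \<alpha>) < 1 - norm \<alpha>" by (simp add: \<rho>_def dist_norm norm_minus_commute)
          then have "norm z < 1" using norm_triangle_sub[of z \<alpha>] by linarith
          then show "z \<in> ball 0 1" by simp
        qed
        define c where "c z = v \<alpha> z - w z * (d z + J \<alpha> z)" for z
        have ch: "c holomorphic_on ball \<alpha> \<rho>" unfolding c_def
          using holomorphic_on_subset[OF Jp(3)[OF aD a0] \<rho>(3)] holomorphic_on_subset[OF w(2) \<rho>(2)]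
                holomorphic_on_subset[OF Jp(2)[OF aD a0] \<rho>(3)] holomorphic_on_subset[OF d(1) sub]
          by (intro holomorphic_intros) auto
        have "q z - (d z)^2 = a z * c z" if z: "z \<in> ball \<alpha> \<rho>" for z
        proof -
          have e1: "q z - (J \<alpha> z)^2 = a z * v \<alpha> z" using Jp(4)[OF aD a0] \<rho>(3) z by auto
          have e2: "d z - J \<alpha> z = a z * w z" using w(3) \<rho>(2) z by auto
          have "q z - (d z)^2 = (q z - (J \<alpha> z)^2) - (d z - J \<alpha> z) * (d z + J \<alpha> z)"
            by (simp add: algebra_simps power2_eq_square)
          also have "\<dots> = a z * c z" unfolding e1 e2 c_def by (simp add: algebra_simps)
          finally show ?thesis .
        qed
        then show "\<exists>\<rho>>0. \<exists>c. c holomorphic_on ball \<alpha> \<rho> \<and> (\<forall>z\<in>ball \<alpha> \<rho>. q z - (d z)^2 = a z * c z)"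
          using \<rho>(1) ch by blast
      qed
      then obtain b where b: "b holomorphic_on ball 0 1" "\<And>z. z \<in> ball 0 1 \<Longrightarrow> q z - (d z)^2 = a z * b z"
        by blast
      have h1: "(\<lambda>z. s z / 2 + d z) holomorphic_on ball 0 1" by (intro holomorphic_intros sh d(1)) auto
      have h2: "(\<lambda>z. s z / 2 - d z) holomorphic_on ball 0 1" by (intro holomorphic_intros sh d(1)) auto
      obtain H :: "complex \<Rightarrow> complex^2^2" where HH: "(\<forall>i j. (\<lambda>z. H z $ i $ j) holomorphic_on ball 0 1) \<and>
        (\<forall>z\<in>ball 0 1. piMap (H z) = (a z, (s z / 2 + d z) + (s z / 2 - d z),
             (s z / 2 + d z) * (s z / 2 - d z) - b z * a z))"
        using mk_matrix[OF h1 b(1) a h2] by (rule exE)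
      note H = HH[THEN conjunct1] HH[THEN conjunct2]
      have "piMap (H z) = (a z, s z, p z)" if z: "z \<in> ball 0 1" for z
      proof -
        have "(s z / 2 + d z) * (s z / 2 - d z) - b z * a z = p z"
          using b(2)[OF z] by (simp add: q_def field_simps power2_eq_square)
        then show ?thesis using H(2) z by simp
      qed
      then show ?thesis using H(1) by blast
    qed
  qed
  then show ?thesis by (simp add: q_def)
qed


end
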